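(* For any real $\tilde q>0$, as $n\to\infty$, $$M_{\lfloor\tilde qn\rfloor}(n,1)\sim\frac{2^{n(1+\tilde q)H\left(\frac1{1+\tilde q}\right)}}{\sqrt{2\pi}\,n^{3/2}}\,\tilde q^{-1}\,(1+\tilde q^{-1})^{\rho(n)-\frac12},$$ where $\rho(n)=\lfloor\tilde qn\rfloor-\tilde qn$ and $H$ is the binary entropy function.
   Context: $\triangle_n^{q-1}=\{\mathbf x\in\mathbb Z^q:x_i\ge0,\sum_ix_i=n\}$, $d_1(\mathbf x,\mathbf y)=\frac12\sum_i|x_i-y_i|$. $M_q(n,h)$ is the largest size of a subset of $\triangle_n^{q-1}$ with pairwise $d_1$-distances $>h$. $H(p)=-p\log_2p-(1-p)\log_2(1-p)$. $f\sim g$ means $f/g\to1$. *)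

theory Defs
  imports "HOL-Analysis.Analysis" "HOL-Library.Landau_Symbols"
begin

text \<open>The discrete disc_simplex: vectors in Z^q (coordinates indexed by 0..q-1,
  represented as functions vanishing outside {0..<q}) with nonnegative entries summing to n.\<close>
definition disc_simplex :: "nat \<Rightarrow> nat \<Rightarrow> (nat \<Rightarrow> int) set" where
  "disc_simplex q n = {x. (\<forall>i<q. x i \<ge> 0) \<and> (\<forall>i\<ge>q. x i = 0) \<and> (\<Sum>i<q. x i) = int n}"

definition d1 :: "nat \<Rightarrow> (nat \<Rightarrow> int) \<Rightarrow> (nat \<Rightarrow> int) \<Rightarrow> real" where
  "d1 q x y = (1/2) * (\<Sum>i<q. real_of_int \<bar>x i - y i\<bar>)"

definition Mq :: "nat \<Rightarrow> nat \<Rightarrow> real \<Rightarrow> nat" where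
  "Mq q n h = Max {card S | S. S \<subseteq> disc_simplex q n \<and>
       (\<forall>x\<in>S. \<forall>y\<in>S. x \<noteq> y \<longrightarrow> d1 q x y > h)}"

definition bin_entropy :: "real \<Rightarrow> real" where
  "bin_entropy p = - p * log 2 p - (1 - p) * log 2 (1 - p)"

end

theory Submission
  imports Defs "HOL-Real_Asymp.Real_Asymp"
begin


definition sa :: "nat \<Rightarrow> real" where
  "sa n = ln (fact n) - (real n + 1/2) * ln (real n) + real n"

lemma sa_diff:
  assumes "n \<ge> 1"
  shows "sa n - sa (Suc n) = (real n + 1/2) * (ln (real n + 1) - ln (real n)) - 1"
proof -
  have "ln (fact (Suc n) :: real) = ln (real n + 1) + ln (fact n)"
    by (simp add: ln_mult add.commute)
  thus ?thesis unfolding sa_def by (simp add: algebra_simps)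
qed

lemma sa_diff_ge: assumes "n \<ge> 1" shows "sa n - sa (Suc n) \<ge> 0"
proof -
  have "ln (real n + 1) - ln (real n) \<ge> 2 * ((real n + 1) - real n) / (real n + (real n + 1))"
    by (rule ln_inverse_approx_ge) (use assms in auto)
  hence "ln (real n + 1) - ln (real n) \<ge> 2 / (2 * real n + 1)" by simp
  hence "(real n + 1/2) * (ln (real n + 1) - ln (real n)) \<ge> (real n + 1/2) * (2 / (2 * real n + 1))"
    by (intro mult_left_mono) auto
  also have "(real n + 1/2) * (2 / (2 * real n + 1)) = 1" by (simp add: field_simps)
  finally show ?thesis using sa_diff[OF assms] by simp
qed

lemma sa_diff_le: assumes "n \<ge> 1" shows "sa n - sa (Suc n) \<le> 1/4 * (1 / real n - 1 / real (Suc n))"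
proof -
  have "ln (real n + 1) - ln (real n) \<le> 1 * (inverse (real n) + inverse (real n + 1))/2"
    using ln_inverse_approx_le[of "real n" 1] assms by simp
  hence "(real n + 1/2) * (ln (real n + 1) - ln (real n)) \<le> (real n + 1/2) * ((inverse (real n) + inverse (real n + 1))/2)"
    by (intro mult_left_mono) auto
  also have "\<dots> = 1 + 1/4 * (1 / real n - 1 / real (Suc n))"
  proof -
    have np: "real n > 0" using assms by simp
    show ?thesis using np by (simp add: field_simps, simp add: divide_simps algebra_simps, smt (verit) mult_pos_pos)
  qed
  finally show ?thesis using sa_diff[OF assms] by linarith
qed

lemma aux4: "1/4*(1-a) + 1/4*(a-b) = 1/4*(1-(b::real))" by argo

lemma sa_lower: assumes "n \<ge> 1" shows "sa n \<ge> sa 1 - 1/4"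
proof -
  have "sa 1 - sa n \<le> 1/4 * (1 - 1 / real n)" if "n \<ge> 1" for n
    using that
  proof (induction n rule: dec_induct)
    case base then show ?case by simp
  next
    case (step m)
    have "sa 1 - sa (Suc m) = (sa 1 - sa m) + (sa m - sa (Suc m))" by simp
    also have "\<dots> \<le> 1/4 * (1 - 1 / real m) + 1/4 * (1 / real m - 1 / real (Suc m))"
      using step sa_diff_le[of m] by linarith
    also have "\<dots> = 1/4 * (1 - 1 / real (Suc m))" by (rule aux4)
    finally show ?case .
  qed
  note h = this[OF assms]
  have "1/4 * (1 - 1 / real n) \<le> 1/4" by simp
  with h have "sa 1 - sa n \<le> 1/4" by linarith
  thus ?thesis by simp
qed

lemma sa_conv: "\<exists>L. (\<lambda>n. sa (Suc n)) \<longlonglongrightarrow> L"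
proof -
  have d: "decseq (\<lambda>n. sa (Suc n))"
    by (rule decseq_SucI) (use sa_diff_ge in force)
  have b: "\<forall>i. sa 1 - 1/4 \<le> sa (Suc i)" using sa_lower by auto
  obtain L where "(\<lambda>n. sa (Suc n)) \<longlonglongrightarrow> L" by (rule decseq_convergent[OF d b])
  thus ?thesis by blast
qed

lemma wallis_step:
  fixes p f g x :: real
  assumes "p*f^2*(2*x+1) = g^4" "x \<ge> 0"
  shows "p * ((4*(x+1)^2) / ((2*x+1)*(2*x+3))) * (f*(2*x+1)*(2*x+2))^2 * (2*x+3) = (g*(2*x+2))^4"
proof -
  define D where "D = (2*x+1)*(2*x+3)"
  define K where "K = f^2*(2*x+2)^2*(2*x+1)"
  have D: "D \<noteq> 0" unfolding D_def using assms(2) by simp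
  have "(f*(2*x+1)*(2*x+2))^2*(2*x+3) = K * D"
    by (simp add: D_def K_def power2_eq_square algebra_simps)
  note eq = this
  have "p * ((4*(x+1)^2) / ((2*x+1)*(2*x+3))) * (f*(2*x+1)*(2*x+2))^2 * (2*x+3)
       = p * ((4*(x+1)^2) / D) * ((f*(2*x+1)*(2*x+2))^2 * (2*x+3))" by (simp add: D_def mult.assoc)
  also have "\<dots> = p * ((4*(x+1)^2) / D) * (K * D)" by (simp only: eq)
  also have "\<dots> = p * (4*(x+1)^2) * K" using D by simp
  also have "\<dots> = (p*f^2*(2*x+1)) * (2*x+2)^4"
    by (simp add: K_def power2_eq_square power4_eq_xxxx algebra_simps)
  also have "\<dots> = (g*(2*x+2))^4" using assms(1) by (simp add: power_mult_distrib)
  finally show ?thesis .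
qed

lemma wallis_id: "(\<Prod>k=1..n. (4*real k^2) / (4*real k^2 - 1)) * (fact (2*n))^2 * (2*real n+1) = (2^n * fact n)^4"
proof (induction n)
  case 0 then show ?case by simp
next
  case (Suc n)
  have e1: "(\<Prod>k=1..Suc n. (4*real k^2) / (4*real k^2 - 1)) = (\<Prod>k=1..n. (4*real k^2) / (4*real k^2 - 1)) * ((4*(real n+1)^2) / ((2*real n+1)*(2*real n+3)))"
    by (simp add: algebra_simps power2_eq_square)
  have e2: "(fact (2 * Suc n) :: real) = fact (2*n) * (2*real n+1) * (2*real n+2)"
    by (simp add: algebra_simps)
  have e4: "(2::real)^(Suc n) * fact (Suc n) = 2^n * fact n * (2*real n+2)" by (simp add: algebra_simps)
  have e5: "2 * real (Suc n) + 1 = 2*real n+3" by simp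
  show ?case
    unfolding e1 e2 e4 e5 by (rule wallis_step[OF Suc.IH]) simp
qed

lemma wallis_factor_pos: "k \<ge> 1 \<Longrightarrow> (4*real k^2)/(4*real k^2 - 1) > 0"
proof -
  assume "k \<ge> 1"
  hence "real k^2 \<ge> 1" by (simp add: one_le_power)
  thus ?thesis by (intro divide_pos_pos) linarith+
qed

lemma ln_fact_sa: "n \<ge> 1 \<Longrightarrow> ln (fact n) = sa n + (real n + 1/2) * ln (real n) - real n"
  unfolding sa_def by simp

lemma sa_limit: "sa \<longlonglongrightarrow> ln (2*pi) / 2"
proof -
  obtain L where L: "(\<lambda>n. sa (Suc n)) \<longlonglongrightarrow> L" using sa_conv by blast
  hence L': "sa \<longlonglongrightarrow> L" by (rule LIMSEQ_imp_Suc)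
  define P where "P n = (\<Prod>k=1..n. (4*real k^2) / (4*real k^2 - 1))" for n
  have Ppos: "P n > 0" for n unfolding P_def
    by (intro prod_pos) (auto intro!: wallis_factor_pos)
  have lnP: "ln (P n) = 4 * sa n - 2 * sa (2*n) - ln 2 + (ln (real n) - ln (2*real n+1))" if n: "n \<ge> 1" for n
  proof -
    have "ln (P n * (fact (2*n))^2 * (2*real n+1)) = ln ((2^n * fact n)^4)"
      using wallis_id[of n] by (simp add: P_def)
    hence "ln (P n) + 2 * ln (fact (2*n)) + ln (2*real n+1) = 4 * (real n * ln 2 + ln (fact n))"
      using Ppos[of n] by (simp add: ln_mult ln_realpow)
    moreover have "ln (fact (2*n)) = sa (2*n) + (2*real n + 1/2) * (ln 2 + ln (real n)) - 2 * real n"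
      using ln_fact_sa[of "2*n"] n by (simp add: ln_mult)
    moreover have "ln (fact n) = sa n + (real n + 1/2) * ln (real n) - real n"
      using ln_fact_sa[OF n] .
    ultimately show ?thesis by (simp add: algebra_simps)
  qed
  have lim1: "(\<lambda>n. 4 * sa n - 2 * sa (2*n) - ln 2 + (ln (real n) - ln (2*real n+1))) \<longlonglongrightarrow> 4*L - 2*L - ln 2 + (- ln 2)"
  proof (intro tendsto_intros L')
    show "(\<lambda>n. sa (2*n)) \<longlonglongrightarrow> L"
    proof -
      have "(sa \<circ> (\<lambda>n. 2*n)) \<longlonglongrightarrow> L" by (rule LIMSEQ_subseq_LIMSEQ[OF L']) (simp add: strict_mono_def)
      thus ?thesis by (simp add: o_def)
    qed
    show "(\<lambda>n. ln (real n) - ln (2*real n+1)) \<longlonglongrightarrow> - ln 2"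
      by real_asymp
  qed
  have "(\<lambda>n. ln (P n)) \<longlonglongrightarrow> ln (pi/2)"
    using wallis unfolding P_def[abs_def] by (intro tendsto_intros) auto
  hence "(\<lambda>n. 4 * sa n - 2 * sa (2*n) - ln 2 + (ln (real n) - ln (2*real n+1))) \<longlonglongrightarrow> ln (pi/2)"
  proof (rule Lim_transform_eventually)
    show "eventually (\<lambda>n. ln (P n) = 4 * sa n - 2 * sa (2*n) - ln 2 + (ln (real n) - ln (2*real n+1))) sequentially"
      using eventually_ge_at_top[of "1::nat"] by eventually_elim (rule lnP)
  qed
  with lim1 have "4*L - 2*L - ln 2 + (- ln 2) = ln (pi/2)" by (rule LIMSEQ_unique)
  hence "L = ln (2*pi)/2" by (simp add: ln_div ln_mult)
  with L' show ?thesis by simp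
qed


definition spx :: "nat set \<Rightarrow> nat \<Rightarrow> (nat \<Rightarrow> int) set" where
  "spx I n = {x. (\<forall>i\<in>I. x i \<ge> 0) \<and> (\<forall>i. i \<notin> I \<longrightarrow> x i = 0) \<and> sum x I = int n}"

lemma disc_simplex_spx: "disc_simplex q n = spx {..<q} n"
  unfolding disc_simplex_def spx_def by auto

lemma sum_choose_shift: "(\<Sum>k\<le>n. (k + c - 1) choose k) = (n + c) choose n"
proof (cases c)
  case 0
  have "(\<Sum>k\<le>n. (k + 0 - 1) choose k) = (\<Sum>k\<le>n. if k = 0 then 1 else 0)"
    by (rule sum.cong) auto
  also have "\<dots> = 1" by simp
  finally show ?thesis using 0 by simp
next
  case (Suc r)
  have "(\<Sum>k\<le>n. (k + c - 1) choose k) = (\<Sum>k\<le>n. (r + k) choose k)"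
    using Suc by (simp add: add.commute)
  also have "\<dots> = Suc (r + n) choose n" by (rule sum_choose_lower)
  finally show ?thesis using Suc by (simp add: ac_simps)
qed

lemma spx_empty: "spx {} n = (if n = 0 then {\<lambda>_. 0} else {})"
  unfolding spx_def by (auto simp: fun_eq_iff)

lemma spx_insert:
  assumes "a \<notin> I" "finite I"
  shows "spx (insert a I) n = (\<Union>k\<in>{..n}. (\<lambda>x. x(a := int k)) ` spx I (n - k))"
proof (intro equalityI subsetI)
  fix x assume x: "x \<in> spx (insert a I) n"
  have x1: "\<forall>i\<in>insert a I. x i \<ge> 0" and z: "\<forall>i. i \<notin> insert a I \<longrightarrow> x i = 0"
    and s0: "sum x (insert a I) = int n" using x unfolding spx_def by blast+
  have nn: "\<forall>i\<in>I. x i \<ge> 0" "x a \<ge> 0" using x1 by auto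
  have s: "x a + sum x I = int n" using s0 assms by (simp add: sum.insert)
  have sI: "sum x I \<ge> 0" using nn by (simp add: sum_nonneg)
  define k where "k = nat (x a)"
  have k1: "int k = x a" unfolding k_def using nn by simp
  have k2: "k \<le> n" using s sI k1 by linarith
  have eqs: "sum (x(a := 0)) I = sum x I" using assms(1) by (intro sum.cong) auto
  have p1: "\<forall>i\<in>I. (x(a:=0)) i \<ge> 0" using nn by simp
  have p2: "\<forall>i. i \<notin> I \<longrightarrow> (x(a:=0)) i = 0" using z by simp
  have p3: "sum (x(a := 0)) I = int (n - k)" using eqs s k1 k2 by (simp add: of_nat_diff)
  have "x(a := 0) \<in> spx I (n - k)" unfolding spx_def using p1 p2 p3 by blast
  moreover have "x = (x(a := 0))(a := int k)" using k1 by simp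
  ultimately show "x \<in> (\<Union>k\<in>{..n}. (\<lambda>x. x(a := int k)) ` spx I (n - k))"
    using k2 by blast
next
  fix y assume "y \<in> (\<Union>k\<in>{..n}. (\<lambda>x. x(a := int k)) ` spx I (n - k))"
  then obtain k x where k: "k \<le> n" and x: "x \<in> spx I (n - k)" and y: "y = x(a := int k)" by auto
  have syI: "sum y I = sum x I" unfolding y using assms by (intro sum.cong) auto
  have xp: "\<forall>i\<in>I. x i \<ge> 0" "\<forall>i. i \<notin> I \<longrightarrow> x i = 0" "sum x I = int (n - k)"
    using x unfolding spx_def by auto
  have "sum y (insert a I) = y a + sum y I" using assms by (simp add: sum.insert)
  also have "\<dots> = int k + int (n - k)" using syI xp(3) y by simp
  also have "\<dots> = int n" using k by simp
  finally have s: "sum y (insert a I) = int n" .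
  have "\<forall>i\<in>insert a I. y i \<ge> 0" using xp(1) y by auto
  moreover have "\<forall>i. i \<notin> insert a I \<longrightarrow> y i = 0" using xp(2) y by auto
  ultimately show "y \<in> spx (insert a I) n" using s unfolding spx_def by blast
qed

lemma spx_card: "finite I \<Longrightarrow> finite (spx I n) \<and> card (spx I n) = (n + card I - 1) choose n"
proof (induction I arbitrary: n rule: finite_induct)
  case empty then show ?case by (simp add: spx_empty)
next
  case (insert a I)
  have inj: "inj_on (\<lambda>x. x(a := int k)) (spx I m)" for k m
  proof (rule inj_onI)
    fix x y assume xy: "x \<in> spx I m" "y \<in> spx I m" and eq: "x(a := int k) = y(a := int k)"
    have a0: "x a = 0" "y a = 0" using xy insert(2) unfolding spx_def by auto
    show "x = y"
    proof
      fix i show "x i = y i" using fun_cong[OF eq, of i] a0 by (cases "i = a") auto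
    qed
  qed
  have disj: "disjoint_family_on (\<lambda>k. (\<lambda>x. x(a := int k)) ` spx I (n - k)) {..n}"
  proof (unfold disjoint_family_on_def, intro ballI impI)
    fix m k :: nat assume "m \<noteq> k"
    show "(\<lambda>x. x(a := int m)) ` spx I (n - m) \<inter> (\<lambda>x. x(a := int k)) ` spx I (n - k) = {}"
    proof (rule ccontr)
      assume "\<not> ?thesis"
      then obtain x y where "x(a := int m) = y(a := int k)" by blast
      hence "int m = int k" by (metis fun_upd_same)
      with \<open>m \<noteq> k\<close> show False by simp
    qed
  qed
  have fin: "finite ((\<lambda>x. x(a := int k)) ` spx I (n - k))" for k using insert(3) by blast
  have "card (spx (insert a I) n) = (\<Sum>k\<le>n. card ((\<lambda>x. x(a := int k)) ` spx I (n - k)))"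
    unfolding spx_insert[OF insert(2) insert(1)]
    by (rule card_UN_disjoint) (use disj fin in \<open>auto simp: disjoint_family_on_def\<close>)
  also have "\<dots> = (\<Sum>k\<le>n. (n - k + card I - 1) choose (n - k))"
    by (intro sum.cong refl) (simp add: card_image[OF inj] insert(3))
  also have "\<dots> = (\<Sum>k\<le>n. (k + card I - 1) choose k)"
    by (rule sum.reindex_bij_witness[of _ "\<lambda>k. n - k" "\<lambda>k. n - k"]) auto
  also have "\<dots> = (n + card I) choose n" by (rule sum_choose_shift)
  finally have c: "card (spx (insert a I) n) = (n + card I) choose n" .
  have f: "finite (spx (insert a I) n)"
    unfolding spx_insert[OF insert(2) insert(1)] using fin by blast
  have "card (insert a I) = Suc (card I)" using insert(1,2) by simp
  thus ?case using c f by simp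
qed

lemma disc_card: "finite (disc_simplex q n) \<and> card (disc_simplex q n) = (n + q - 1) choose n"
  using spx_card[of "{..<q}" n] by (simp add: disc_simplex_spx)

definition good :: "nat \<Rightarrow> real \<Rightarrow> (nat \<Rightarrow> int) set \<Rightarrow> bool" where
  "good q h S = (\<forall>x\<in>S. \<forall>y\<in>S. x \<noteq> y \<longrightarrow> d1 q x y > h)"

abbreviation MqS where "MqS q n h \<equiv> {card S | S. S \<subseteq> disc_simplex q n \<and> (\<forall>x\<in>S. \<forall>y\<in>S. x \<noteq> y \<longrightarrow> d1 q x y > h)}"

lemma Mq_set_fin: "finite (MqS q n h)"
proof (rule finite_subset)
  have fin: "finite (disc_simplex q n)" using disc_card[of q n] by (rule conjunct1)
  show "MqS q n h \<subseteq> {..card (disc_simplex q n)}"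
  proof (rule subsetI)
    fix c assume "c \<in> MqS q n h"
    then obtain S where S: "c = card S" "S \<subseteq> disc_simplex q n" unfolding mem_Collect_eq by auto
    have "card S \<le> card (disc_simplex q n)" by (rule card_mono[OF fin S(2)])
    thus "c \<in> {..card (disc_simplex q n)}" using S(1) by simp
  qed
qed simp

lemma Mq_ge:
  assumes "S \<subseteq> disc_simplex q n" "good q h S"
  shows "card S \<le> Mq q n h"
proof -
  have "card S \<in> MqS q n h"
    by (rule CollectI, rule exI[of _ S]) (use assms in \<open>simp add: good_def\<close>)
  thus ?thesis unfolding Mq_def by (rule Max_ge[OF Mq_set_fin])
qed

lemma ne_imp_nonempty: "x \<in> A \<Longrightarrow> A \<noteq> {}" by blast

lemma Mq_obtain:
  obtains S where "S \<subseteq> disc_simplex q n" "good q h S" "card S = Mq q n h"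
proof -
  have ne: "MqS q n h \<noteq> {}"
  proof -
    have "card ({}::(nat\<Rightarrow>int) set) \<in> MqS q n h"
      by (rule CollectI, rule exI[of _ "{}"]) simp
    thus ?thesis by (rule ne_imp_nonempty)
  qed
  have "Mq q n h \<in> MqS q n h"
    unfolding Mq_def by (rule Max_in[OF Mq_set_fin ne])
  then obtain S where S: "S \<subseteq> disc_simplex q n" "\<forall>x\<in>S. \<forall>y\<in>S. x \<noteq> y \<longrightarrow> d1 q x y > h" "Mq q n h = card S"
    by auto
  show ?thesis by (rule that[OF S(1) _ S(3)[symmetric]]) (use S(2) in \<open>simp add: good_def\<close>)
qed

lemma sum_le_two_pos_neg:
  fixes d :: "nat \<Rightarrow> int"
  assumes "finite A" "i \<in> A" "j \<in> A" "i \<noteq> j" "d i > 0" "d j < 0" "(\<Sum>k\<in>A. \<bar>d k\<bar>) \<le> 2"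
  shows "d i = 1 \<and> d j = -1 \<and> (\<forall>k\<in>A. k \<noteq> i \<longrightarrow> k \<noteq> j \<longrightarrow> d k = 0)"
proof -
  have split: "(\<Sum>k\<in>A. \<bar>d k\<bar>) = \<bar>d i\<bar> + \<bar>d j\<bar> + (\<Sum>k\<in>A - {i, j}. \<bar>d k\<bar>)"
  proof -
    have "(\<Sum>k\<in>A. \<bar>d k\<bar>) = (\<Sum>k\<in>{i,j}. \<bar>d k\<bar>) + (\<Sum>k\<in>A - {i, j}. \<bar>d k\<bar>)"
      using assms(1-3) by (subst sum.subset_diff[of "{i,j}"]) auto
    thus ?thesis using assms(4) by simp
  qed
  have r: "(\<Sum>k\<in>A - {i, j}. \<bar>d k\<bar>) \<ge> 0" by (rule sum_nonneg) simp
  have "d i = 1" "d j = -1" using split r assms(5-7) by linarith+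
  moreover have "(\<Sum>k\<in>A - {i, j}. \<bar>d k\<bar>) = 0" using split r assms(5-7) \<open>d i = 1\<close> \<open>d j = -1\<close> by linarith
  hence "\<forall>k\<in>A - {i,j}. \<bar>d k\<bar> = 0" using assms(1) by (subst (asm) sum_nonneg_eq_0_iff) auto
  ultimately show ?thesis by auto
qed

lemma d1_le_one:
  assumes x: "x \<in> disc_simplex q n" and y: "y \<in> disc_simplex q n" and xy: "x \<noteq> y"
      and d: "d1 q x y \<le> 1"
  shows "\<exists>i<q. \<exists>j<q. i \<noteq> j \<and> x i - y i = 1 \<and> x j - y j = -1 \<and> (\<forall>k<q. k \<noteq> i \<longrightarrow> k \<noteq> j \<longrightarrow> x k - y k = 0)"
proof -
  define e where "e k = x k - y k" for k
  have xs: "\<forall>i<q. x i \<ge> 0" "\<forall>i\<ge>q. x i = 0" "(\<Sum>i<q. x i) = int n" using x unfolding disc_simplex_def by auto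
  have ys: "\<forall>i<q. y i \<ge> 0" "\<forall>i\<ge>q. y i = 0" "(\<Sum>i<q. y i) = int n" using y unfolding disc_simplex_def by auto
  have se: "(\<Sum>k<q. e k) = 0" using xs(3) ys(3) unfolding e_def by (simp add: sum_subtractf)
  have ab: "(\<Sum>k<q. \<bar>e k\<bar>) \<le> 2"
  proof -
    have "(\<Sum>k<q. real_of_int \<bar>e k\<bar>) \<le> 2" using d unfolding d1_def e_def by simp
    hence "real_of_int (\<Sum>k<q. \<bar>e k\<bar>) \<le> 2" by simp
    thus ?thesis by linarith
  qed
  obtain k0 where k0: "k0 < q" "e k0 \<noteq> 0"
  proof -
    have "\<exists>k. x k \<noteq> y k" using xy by (auto simp: fun_eq_iff)
    then obtain k where "x k \<noteq> y k" by blast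
    moreover have "k < q" using calculation xs(2) ys(2) by (metis not_le)
    ultimately show ?thesis using that e_def by auto
  qed
  have exi: "\<exists>i<q. e i > 0"
  proof (rule ccontr)
    assume "\<not> ?thesis"
    hence np: "\<forall>i<q. e i \<le> 0" by auto
    have "(\<Sum>k<q. - e k) = 0" using se by (simp add: sum_negf)
    hence "\<forall>k\<in>{..<q}. - e k = 0" using np by (subst (asm) sum_nonneg_eq_0_iff) auto
    with k0 show False by auto
  qed
  have exj: "\<exists>j<q. e j < 0"
  proof (rule ccontr)
    assume "\<not> ?thesis"
    hence np: "\<forall>i<q. e i \<ge> 0" by auto
    hence "\<forall>k\<in>{..<q}. e k = 0" using se by (subst (asm) sum_nonneg_eq_0_iff) auto
    with k0 show False by auto
  qed
  obtain i j where ij: "i < q" "j < q" "e i > 0" "e j < 0" using exi exj by blast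
  hence "i \<noteq> j" by auto
  from sum_le_two_pos_neg[of "{..<q}" i j e] ij this ab
  have "e i = 1 \<and> e j = -1 \<and> (\<forall>k\<in>{..<q}. k \<noteq> i \<longrightarrow> k \<noteq> j \<longrightarrow> e k = 0)" by simp
  thus ?thesis using ij \<open>i \<noteq> j\<close> unfolding e_def by auto
qed

definition wcls :: "nat \<Rightarrow> (nat \<Rightarrow> int) \<Rightarrow> int" where
  "wcls q x = (\<Sum>k<q. int k * x k) mod int q"

lemma wcls_good:
  assumes "x \<in> disc_simplex q n" "y \<in> disc_simplex q n" "x \<noteq> y" "wcls q x = wcls q y"
  shows "d1 q x y > 1"
proof (rule ccontr)
  assume "\<not> d1 q x y > 1"
  hence "d1 q x y \<le> 1" by simp
  from d1_le_one[OF assms(1-3) this] obtain i j where ij: "i < q" "j < q" "i \<noteq> j"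
    "x i - y i = 1" "x j - y j = -1" "\<forall>k<q. k \<noteq> i \<longrightarrow> k \<noteq> j \<longrightarrow> x k - y k = 0" by blast
  have "(\<Sum>k<q. int k * x k) - (\<Sum>k<q. int k * y k) = (\<Sum>k<q. int k * (x k - y k))"
    by (simp add: sum_subtractf algebra_simps)
  also have "\<dots> = (\<Sum>k\<in>{i,j}. int k * (x k - y k))"
    by (rule sum.mono_neutral_right) (use ij in auto)
  also have "\<dots> = int i - int j" using ij by simp
  finally have eq: "(\<Sum>k<q. int k * x k) - (\<Sum>k<q. int k * y k) = int i - int j" .
  have "int q dvd (\<Sum>k<q. int k * x k) - (\<Sum>k<q. int k * y k)"
    using assms(4) unfolding wcls_def by (simp add: mod_eq_dvd_iff)
  hence dv: "int q dvd int i - int j" using eq by simp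
  have "int i - int j \<noteq> 0" using ij by simp
  from dvd_imp_le_int[OF this dv] have "\<bar>int q\<bar> \<le> \<bar>int i - int j\<bar>" .
  thus False using ij by linarith
qed

lemma lower_bound:
  assumes "q \<ge> 1"
  shows "real (card (disc_simplex q n)) / real q \<le> real (Mq q n 1)"
proof -
  define D where "D = disc_simplex q n"
  have fin: "finite D" using disc_card[of q n] unfolding D_def by (rule conjunct1)
  define C where "C c = {x\<in>D. wcls q x = int c}" for c :: nat
  have cov: "D = (\<Union>c\<in>{..<q}. C c)"
  proof (intro equalityI subsetI)
    fix x assume x: "x \<in> D"
    have "wcls q x \<ge> 0" "wcls q x < int q" using assms unfolding wcls_def by auto
    hence "nat (wcls q x) < q" "wcls q x = int (nat (wcls q x))" by auto
    thus "x \<in> (\<Union>c\<in>{..<q}. C c)" using x unfolding C_def by blast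
  qed (auto simp: C_def)
  have "card D \<le> (\<Sum>c<q. card (C c))" unfolding cov by (rule card_UN_le) simp
  hence le: "real (card D) \<le> (\<Sum>c<q. real (card (C c)))" by (metis of_nat_le_iff of_nat_sum)
  have "\<exists>c<q. real (card D) / real q \<le> real (card (C c))"
  proof (rule ccontr)
    assume "\<not> ?thesis"
    hence lt: "\<forall>c<q. real (card (C c)) < real (card D) / real q" by auto
    have "(\<Sum>c<q. real (card (C c))) < (\<Sum>c<q. real (card D) / real q)"
    proof (rule sum_strict_mono)
      show "{..<q} \<noteq> {}" using assms by (simp add: lessThan_empty_iff)
    qed (use lt in auto)
    also have "\<dots> = real (card D)" using assms by simp
    finally show False using le by simp
  qed
  then obtain c where c: "real (card D) / real q \<le> real (card (C c))" by blast
  have "good q 1 (C c)" unfolding good_def C_def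
    using wcls_good unfolding D_def by auto
  moreover have "C c \<subseteq> disc_simplex q n" unfolding C_def D_def by auto
  ultimately have "card (C c) \<le> Mq q n 1" by (rule Mq_ge[rotated])
  thus ?thesis using c unfolding D_def by linarith
qed

lemma sum_upd:
  fixes f :: "nat \<Rightarrow> 'a::ab_group_add"
  assumes "finite A" "i \<in> A"
  shows "sum (f(i := v)) A = sum f A - f i + v"
proof -
  have "sum (f(i := v)) A = v + sum (f(i := v)) (A - {i})" using assms by (simp add: sum.remove)
  also have "sum (f(i := v)) (A - {i}) = sum f (A - {i})" by (rule sum.cong) auto
  also have "sum f (A - {i}) = sum f A - f i" using assms by (simp add: sum_diff1)
  finally show ?thesis by (simp add: algebra_simps)
qed

definition supp :: "nat \<Rightarrow> (nat \<Rightarrow> int) \<Rightarrow> nat set" where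
  "supp q x = {i\<in>{..<q}. x i > 0}"

lemma supp_fin [simp]: "finite (supp q x)" unfolding supp_def by simp

definition sh :: "nat \<Rightarrow> (nat \<Rightarrow> int) \<Rightarrow> (nat \<Rightarrow> int) set" where
  "sh q x = (\<lambda>i. x(i := x i - 1)) ` supp q x"

lemma sh_card: "card (sh q x) = card (supp q x)"
  unfolding sh_def
proof (rule card_image, rule inj_onI)
  fix i j assume "i \<in> supp q x" "j \<in> supp q x" and eq: "x(i := x i - 1) = x(j := x j - 1)"
  show "i = j"
  proof (rule ccontr)
    assume "i \<noteq> j"
    hence "x i - 1 = x i" using fun_cong[OF eq, of i] by simp
    thus False by simp
  qed
qed

lemma sh_sub:
  assumes "x \<in> disc_simplex q n"
  shows "sh q x \<subseteq> disc_simplex q (n - 1)"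
proof
  fix z assume "z \<in> sh q x"
  then obtain i where i: "i < q" "x i > 0" and z: "z = x(i := x i - 1)" unfolding sh_def supp_def by auto
  have xs: "\<forall>i<q. x i \<ge> 0" "\<forall>i\<ge>q. x i = 0" "(\<Sum>i<q. x i) = int n" using assms unfolding disc_simplex_def by auto
  have "x i \<le> (\<Sum>i<q. x i)" using i xs(1) by (intro member_le_sum) auto
  hence n1: "n \<ge> 1" using i xs(3) by linarith
  have "(\<Sum>k<q. z k) = int n - 1" unfolding z using sum_upd[of "{..<q}" i x "x i - 1"] i xs(3) by simp
  also have "\<dots> = int (n - 1)" using n1 by simp
  finally have "(\<Sum>k<q. z k) = int (n - 1)" .
  moreover have "\<forall>k<q. z k \<ge> 0" using xs(1) i unfolding z by auto
  moreover have "\<forall>k\<ge>q. z k = 0" using xs(2) i unfolding z by auto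
  ultimately show "z \<in> disc_simplex q (n - 1)" unfolding disc_simplex_def by blast
qed

lemma sh_disj:
  assumes S: "S \<subseteq> disc_simplex q n" "good q 1 S" and xy: "x \<in> S" "y \<in> S" "x \<noteq> y"
  shows "sh q x \<inter> sh q y = {}"
proof (rule ccontr)
  assume "\<not> ?thesis"
  then obtain i j where i: "i < q" "x i > 0" and j: "j < q" "y j > 0" and eq: "x(i := x i - 1) = y(j := y j - 1)"
    unfolding sh_def supp_def by auto
  have xs: "\<forall>k\<ge>q. x k = 0" using xy S unfolding disc_simplex_def by auto
  have ys: "\<forall>k\<ge>q. y k = 0" using xy S unfolding disc_simplex_def by auto
  show False
  proof (cases "i = j")
    case True
    have "x = y"
    proof
      fix k show "x k = y k" using fun_cong[OF eq, of k] True by (cases "k = i") auto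
    qed
    with xy show False by simp
  next
    case False
    have ei: "x i - y i = 1" using fun_cong[OF eq, of i] False by simp
    have ej: "x j - y j = -1" using fun_cong[OF eq, of j] False by simp
    have ek: "\<forall>k. k \<noteq> i \<longrightarrow> k \<noteq> j \<longrightarrow> x k - y k = 0"
    proof (intro allI impI)
      fix k assume "k \<noteq> i" "k \<noteq> j"
      thus "x k - y k = 0" using fun_cong[OF eq, of k] by simp
    qed
    have "(\<Sum>k<q. real_of_int \<bar>x k - y k\<bar>) = (\<Sum>k\<in>{i,j}. real_of_int \<bar>x k - y k\<bar>)"
      by (rule sum.mono_neutral_right) (use i j ek in auto)
    also have "\<dots> = 2" using ei ej False by simp
    finally have "d1 q x y = 1" unfolding d1_def by simp
    moreover have "d1 q x y > 1" using S(2) xy unfolding good_def by blast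
    ultimately show False by simp
  qed
qed

lemma upper_main:
  assumes s: "s \<ge> 1" and S: "S \<subseteq> disc_simplex q n" "good q 1 S"
  shows "real (card S) \<le> real (card {x\<in>disc_simplex q n. card (supp q x) < s}) + real (card (disc_simplex q (n - 1))) / real s"
proof -
  have finD: "finite (disc_simplex q m)" for m using disc_card[of q m] by (rule conjunct1)
  have finS: "finite S" using S(1) finD by (rule finite_subset)
  define S1 where "S1 = {x\<in>S. card (supp q x) < s}"
  define S2 where "S2 = {x\<in>S. \<not> card (supp q x) < s}"
  have "S = S1 \<union> S2" "S1 \<inter> S2 = {}" unfolding S1_def S2_def by auto
  hence cS: "card S = card S1 + card S2" using finS by (metis card_Un_disjoint finite_Un)
  have c1: "card S1 \<le> card {x\<in>disc_simplex q n. card (supp q x) < s}"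
    by (rule card_mono) (use S(1) finD in \<open>auto simp: S1_def\<close>)
  have finS2: "finite S2" using finS unfolding S2_def by simp
  have un: "card (\<Union>x\<in>S2. sh q x) = (\<Sum>x\<in>S2. card (sh q x))"
  proof (rule card_UN_disjoint[OF finS2])
    show "\<forall>x\<in>S2. finite (sh q x)" unfolding sh_def by simp
    show "\<forall>x\<in>S2. \<forall>y\<in>S2. x \<noteq> y \<longrightarrow> sh q x \<inter> sh q y = {}"
      using sh_disj[OF S] unfolding S2_def by blast
  qed
  have "(\<Union>x\<in>S2. sh q x) \<subseteq> disc_simplex q (n - 1)"
    using sh_sub S(1) unfolding S2_def by blast
  hence "card (\<Union>x\<in>S2. sh q x) \<le> card (disc_simplex q (n - 1))" by (rule card_mono[OF finD])
  hence le1: "(\<Sum>x\<in>S2. card (supp q x)) \<le> card (disc_simplex q (n - 1))" using un by (simp add: sh_card)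
  have "s * card S2 \<le> (\<Sum>x\<in>S2. card (supp q x))"
  proof -
    have "(\<Sum>x\<in>S2. s) \<le> (\<Sum>x\<in>S2. card (supp q x))" by (rule sum_mono) (auto simp: S2_def)
    thus ?thesis by (simp add: mult.commute)
  qed
  hence "real s * real (card S2) \<le> real (card (disc_simplex q (n - 1)))" using le1
    by (metis le_trans of_nat_le_iff of_nat_mult)
  hence c2: "real (card S2) \<le> real (card (disc_simplex q (n - 1))) / real s"
    using s by (simp add: field_simps)
  show ?thesis using cS c1 c2 by simp
qed

lemma supp_eq_card:
  assumes J: "J \<subseteq> {..<q}" "card J = k" "k \<ge> 1"
  shows "card {x\<in>disc_simplex q n. supp q x = J} \<le> (n - 1) choose (k - 1)"
proof (cases "{x\<in>disc_simplex q n. supp q x = J} = {}")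
  case True then show ?thesis by (subst True) simp
next
  case False
  then obtain x0 where x0: "x0 \<in> disc_simplex q n" "supp q x0 = J" by blast
  have finJ: "finite J" using J(1) finite_subset by blast
  have props: "(\<forall>i\<in>J. x i \<ge> 1) \<and> (\<forall>i. i \<notin> J \<longrightarrow> x i = 0) \<and> sum x J = int n"
    if x: "x \<in> disc_simplex q n" "supp q x = J" for x
  proof -
    have xs: "\<forall>i<q. x i \<ge> 0" "\<forall>i\<ge>q. x i = 0" "(\<Sum>i<q. x i) = int n" using x unfolding disc_simplex_def by auto
    have a: "\<forall>i\<in>J. x i \<ge> 1" using x(2) unfolding supp_def by auto
    have b: "\<forall>i. i \<notin> J \<longrightarrow> x i = 0"
    proof (intro allI impI)
      fix i assume "i \<notin> J"
      show "x i = 0"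
      proof (cases "i < q")
        case True
        hence "\<not> x i > 0" using x(2) \<open>i \<notin> J\<close> unfolding supp_def by auto
        thus ?thesis using xs(1) True by force
      qed (use xs(2) in auto)
    qed
    have "sum x J = (\<Sum>i<q. x i)" by (rule sum.mono_neutral_left) (use J(1) b in auto)
    thus ?thesis using a b xs(3) by simp
  qed
  have kn: "k \<le> n"
  proof -
    have p: "\<forall>i\<in>J. x0 i \<ge> 1" "sum x0 J = int n" using props[OF x0] by auto
    have "(\<Sum>i\<in>J. (1::int)) \<le> sum x0 J" by (rule sum_mono) (use p in auto)
    thus ?thesis using p J(2) by simp
  qed
  define \<phi> where "\<phi> x = (\<lambda>i. if i \<in> J then x i - 1 else x i)" for x :: "nat \<Rightarrow> int"
  have inj: "inj_on \<phi> {x\<in>disc_simplex q n. supp q x = J}"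
  proof (rule inj_onI)
    fix x y assume e: "\<phi> x = \<phi> y"
    show "x = y"
    proof
      fix i show "x i = y i" using fun_cong[OF e, of i] unfolding \<phi>_def by (cases "i \<in> J") auto
    qed
  qed
  have img: "\<phi> ` {x\<in>disc_simplex q n. supp q x = J} \<subseteq> spx J (n - k)"
  proof
    fix z assume "z \<in> \<phi> ` {x\<in>disc_simplex q n. supp q x = J}"
    then obtain x where x: "x \<in> disc_simplex q n" "supp q x = J" and z: "z = \<phi> x" by blast
    have p: "\<forall>i\<in>J. x i \<ge> 1" "\<forall>i. i \<notin> J \<longrightarrow> x i = 0" "sum x J = int n" using props[OF x] by auto
    have "sum z J = sum x J - (\<Sum>i\<in>J. 1)" unfolding z \<phi>_def by (simp add: sum_subtractf)
    also have "\<dots> = int (n - k)" using p(3) J(2) kn by simp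
    finally show "z \<in> spx J (n - k)" unfolding spx_def using p unfolding z \<phi>_def by auto
  qed
  have "card {x\<in>disc_simplex q n. supp q x = J} = card (\<phi> ` {x\<in>disc_simplex q n. supp q x = J})"
    by (rule card_image[symmetric, OF inj])
  also have "\<dots> \<le> card (spx J (n - k))" using spx_card[OF finJ, of "n - k"] img by (intro card_mono) auto
  also have "\<dots> = (n - k + k - 1) choose (n - k)" using spx_card[OF finJ, of "n - k"] J(2) by simp
  also have "\<dots> = (n - 1) choose (n - k)" using kn by simp
  also have "\<dots> = (n - 1) choose (k - 1)"
    using binomial_symmetric[of "k - 1" "n - 1"] kn J(3) by simp
  finally show ?thesis .
qed

lemma supp_nonempty:
  assumes "x \<in> disc_simplex q n" "n \<ge> 1"
  shows "card (supp q x) \<ge> 1"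
proof (rule ccontr)
  assume "\<not> ?thesis"
  hence "card (supp q x) = 0" by linarith
  hence "supp q x = {}" using supp_fin[of q x] by (simp add: card_eq_0_iff)
  hence "\<forall>i<q. x i \<le> 0" unfolding supp_def by auto
  hence "(\<Sum>i<q. x i) \<le> 0" by (intro sum_nonpos) auto
  thus False using assms unfolding disc_simplex_def by auto
qed

lemma small_count:
  assumes "n \<ge> 1"
  shows "card {x\<in>disc_simplex q n. card (supp q x) < s} \<le> (\<Sum>k\<in>{1..<s}. (q choose k) * ((n - 1) choose (k - 1)))"
proof -
  define Sub where "Sub k = {J. J \<subseteq> {..<q} \<and> card J = k}" for k
  define F where "F J = {x\<in>disc_simplex q n. supp q x = J}" for J
  have finSub: "finite (Sub k)" for k unfolding Sub_def by (rule finite_subset[of _ "Pow {..<q}"]) auto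
  have finF: "finite (F J)" for J
    using disc_card[of q n] unfolding F_def by auto
  have sub: "{x\<in>disc_simplex q n. card (supp q x) < s} \<subseteq> (\<Union>k\<in>{1..<s}. \<Union>J\<in>Sub k. F J)"
  proof
    fix x assume x: "x \<in> {x\<in>disc_simplex q n. card (supp q x) < s}"
    have "card (supp q x) \<ge> 1" using supp_nonempty x assms by auto
    moreover have "supp q x \<subseteq> {..<q}" unfolding supp_def by auto
    ultimately show "x \<in> (\<Union>k\<in>{1..<s}. \<Union>J\<in>Sub k. F J)"
      using x unfolding Sub_def F_def by auto
  qed
  have "card {x\<in>disc_simplex q n. card (supp q x) < s} \<le> card (\<Union>k\<in>{1..<s}. \<Union>J\<in>Sub k. F J)"
    by (rule card_mono[OF _ sub]) (use finSub finF in auto)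
  also have "\<dots> \<le> (\<Sum>k\<in>{1..<s}. card (\<Union>J\<in>Sub k. F J))" by (rule card_UN_le) simp
  also have "\<dots> \<le> (\<Sum>k\<in>{1..<s}. \<Sum>J\<in>Sub k. card (F J))"
    by (intro sum_mono card_UN_le finSub)
  also have "\<dots> \<le> (\<Sum>k\<in>{1..<s}. \<Sum>J\<in>Sub k. (n - 1) choose (k - 1))"
  proof (intro sum_mono)
    fix k J assume "k \<in> {1..<s}" "J \<in> Sub k"
    thus "card (F J) \<le> (n - 1) choose (k - 1)" unfolding F_def Sub_def
      by (intro supp_eq_card) auto
  qed
  also have "\<dots> = (\<Sum>k\<in>{1..<s}. (q choose k) * ((n - 1) choose (k - 1)))"
  proof (rule sum.cong[OF refl])
    fix k
    have "card (Sub k) = q choose k" unfolding Sub_def using n_subsets[of "{..<q}" k] by simp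
    thus "(\<Sum>J\<in>Sub k. (n - 1) choose (k - 1)) = (q choose k) * ((n - 1) choose (k - 1))" by simp
  qed
  finally show ?thesis .
qed


lemma choose_step1: "(q choose Suc k) * Suc k = (q choose k) * (q - k)"
  using binomial_absorption[of k q] binomial_absorb_comp[of q k] by (simp add: mult.commute)

lemma choose_step2: assumes "k \<ge> 1" shows "((n - 1) choose k) * k = ((n - 1) choose (k - 1)) * (n - k)"
proof -
  have "((n - 1) choose Suc (k - 1)) * Suc (k - 1) = ((n - 1) choose (k - 1)) * (n - 1 - (k - 1))"
    by (rule choose_step1)
  moreover have "Suc (k - 1) = k" "n - 1 - (k - 1) = n - k" using assms by auto
  ultimately show ?thesis by simp
qed

definition TT :: "nat \<Rightarrow> nat \<Rightarrow> nat \<Rightarrow> real" where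
  "TT q n k = real (q choose k) * real ((n - 1) choose (k - 1))"

lemma TT_step: assumes "k \<ge> 1"
  shows "TT q n (Suc k) * (real (Suc k) * real k) = TT q n k * (real (q - k) * real (n - k))"
proof -
  have a: "real (q choose Suc k) * real (Suc k) = real (q choose k) * real (q - k)"
    using choose_step1[of q k] by (metis of_nat_mult)
  have b: "real ((n - 1) choose k) * real k = real ((n - 1) choose (k - 1)) * real (n - k)"
    using choose_step2[OF assms, of n] by (metis of_nat_mult)
  have "TT q n (Suc k) * (real (Suc k) * real k) = (real (q choose Suc k) * real (Suc k)) * (real ((n - 1) choose k) * real k)"
    unfolding TT_def by simp
  also have "\<dots> = TT q n k * (real (q - k) * real (n - k))" unfolding a b TT_def by simp
  finally show ?thesis .
qed

lemma TT_nonneg: "TT q n k \<ge> 0" unfolding TT_def by simp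

lemma geom_aux:
  fixes r :: real
  assumes "0 < r" "r < 1" "s \<le> s0"
  shows "(\<Sum>k<s. r ^ (s0 - k)) \<le> r ^ (s0 - s) * (r / (1 - r))"
  using assms(3)
proof (induction s)
  case 0 then show ?case using assms by simp
next
  case (Suc s)
  have "(\<Sum>k<Suc s. r ^ (s0 - k)) = (\<Sum>k<s. r ^ (s0 - k)) + r ^ (s0 - s)" by simp
  also have "\<dots> \<le> r ^ (s0 - s) * (r / (1 - r)) + r ^ (s0 - s)" using Suc by simp
  also have "\<dots> = r ^ (s0 - s) / (1 - r)" using assms by (simp add: field_simps)
  also have "r ^ (s0 - s) = r ^ (s0 - Suc s) * r" using Suc.prems
    by (metis Suc_diff_le Suc_le_lessD power_Suc2 diff_Suc_Suc)
  finally show ?case by (simp add: field_simps)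
qed

lemma tail_geom:
  fixes T :: "nat \<Rightarrow> real" and R :: real
  assumes R: "R > 1" and step: "\<And>k. 1 \<le> k \<Longrightarrow> k < s0 \<Longrightarrow> R * T k \<le> T (Suc k)"
    and nn: "\<And>k. T k \<ge> 0" and ss: "s \<le> s0"
  shows "(\<Sum>k\<in>{1..<s}. T k) \<le> T s0 / ((R - 1) * R ^ (s0 - s))"
proof -
  define r where "r = 1 / R"
  have r: "0 < r" "r < 1" using R unfolding r_def by auto
  have bnd: "T k \<le> T s0 * r ^ (s0 - k)" if "1 \<le> k" "k \<le> s0" for k
  proof -
    have "\<forall>k. 1 \<le> k \<longrightarrow> s0 - k = d \<longrightarrow> k \<le> s0 \<longrightarrow> T k \<le> T s0 * r ^ (s0 - k)" for d
    proof (induction d)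
      case 0 then show ?case by auto
    next
      case (Suc d)
      show ?case
      proof (intro allI impI)
        fix k assume k: "1 \<le> k" "s0 - k = Suc d" "k \<le> s0"
        have e: "s0 - Suc k = d" "Suc k \<le> s0" "1 \<le> Suc k" using k by arith+
        have "T (Suc k) \<le> T s0 * r ^ (s0 - Suc k)" using Suc.IH[rule_format, OF e(3) e(1) e(2)] e(1) by simp
        moreover have "R * T k \<le> T (Suc k)" using step k by auto
        ultimately have "T k \<le> T s0 * r ^ (s0 - Suc k) / R" using R by (simp add: field_simps)
        also have "\<dots> = T s0 * (r ^ (s0 - Suc k) * r)" unfolding r_def by simp
        also have "r ^ (s0 - Suc k) * r = r ^ (s0 - k)"
        proof -
          have e2: "s0 - k = Suc (s0 - Suc k)" using k by arith
          show ?thesis unfolding e2 by (simp only: power_Suc2)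
        qed
        finally show "T k \<le> T s0 * r ^ (s0 - k)" .
      qed
    qed
    thus ?thesis using that by auto
  qed
  have "(\<Sum>k\<in>{1..<s}. T k) \<le> (\<Sum>k\<in>{1..<s}. T s0 * r ^ (s0 - k))"
    by (rule sum_mono) (use bnd ss in auto)
  also have "\<dots> \<le> (\<Sum>k<s. T s0 * r ^ (s0 - k))"
    by (rule sum_mono2) (use nn r in auto)
  also have "\<dots> = T s0 * (\<Sum>k<s. r ^ (s0 - k))" by (simp add: sum_distrib_left)
  also have "\<dots> \<le> T s0 * (r ^ (s0 - s) * (r / (1 - r)))"
    by (rule mult_left_mono[OF geom_aux[OF r ss] nn])
  also have "\<dots> = T s0 / ((R - 1) * R ^ (s0 - s))"
    using R unfolding r_def by (simp add: field_simps power_one_over)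
  finally show ?thesis .
qed

lemma TT_le_binom:
  assumes "1 \<le> s0" "s0 \<le> n"
  shows "TT q n s0 \<le> real ((n + q - 1) choose n)"
proof -
  have "(q choose s0) * ((n - 1) choose (n - s0)) \<le> (\<Sum>k\<le>n. (q choose k) * ((n - 1) choose (n - k)))"
    by (rule member_le_sum) (use assms in auto)
  also have "\<dots> = (q + (n - 1)) choose n" by (rule vandermonde)
  also have "q + (n - 1) = n + q - 1" using assms by simp
  finally have a: "(q choose s0) * ((n - 1) choose (n - s0)) \<le> (n + q - 1) choose n" .
  have "(n - 1) choose (s0 - 1) = (n - 1) choose (n - 1 - (s0 - 1))"
    by (rule binomial_symmetric) (use assms in auto)
  also have "n - 1 - (s0 - 1) = n - s0" using assms by auto
  finally have b: "(n - 1) choose (s0 - 1) = (n - 1) choose (n - s0)" .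
  show ?thesis unfolding TT_def b using a by (metis of_nat_le_iff of_nat_mult)
qed

lemma ratio_cond:
  fixes a m nr qr :: real
  assumes a: "0 < a" "a < 1" and nq: "nr > 0" "qr > 0" and m: "m = nr * qr / (nr + qr)"
    and k: "0 \<le> kr" "kr + 1 \<le> s0r" "s0r \<le> a * m"
  shows "(2 - a) * (kr * (kr + 1)) \<le> (qr - kr) * (nr - kr)"
proof -
  have mpos: "m > 0" using nq m by simp
  have mq: "m \<le> qr" using nq unfolding m by (simp add: field_simps)
  have mn: "m \<le> nr" using nq unfolding m by (simp add: field_simps)
  have m2: "m * m \<le> nr * qr"
  proof -
    have "m * m = nr * qr * (nr * qr / ((nr + qr) * (nr + qr)))" unfolding m by (simp add: field_simps)
    also have "nr * qr / ((nr + qr) * (nr + qr)) \<le> 1"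
    proof -
      have e: "(nr+qr)*(nr+qr) = nr*qr + (nr*nr + nr*qr + qr*qr)" by (simp add: algebra_simps)
      have "nr*nr + nr*qr + qr*qr \<ge> 0" using nq by (intro add_nonneg_nonneg) auto
      hence "nr * qr \<le> (nr+qr)*(nr+qr)" using e by linarith
      moreover have "(nr+qr)*(nr+qr) > 0" using nq by simp
      ultimately show ?thesis by (simp add: divide_le_eq_1)
    qed
    hence "nr * qr * (nr * qr / ((nr + qr) * (nr + qr))) \<le> nr * qr * 1" using nq
      by (intro mult_left_mono) auto
    finally show ?thesis by simp
  qed
  have kam: "kr \<le> a * m" using k by linarith
  have am: "a * m \<le> m" using a mpos by simp
  have kk: "kr * (kr + 1) \<le> (a * m) * (a * m)"
  proof -
    have "kr * (kr + 1) \<le> s0r * s0r" using k by (intro mult_mono) auto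
    also have "\<dots> \<le> (a * m) * (a * m)" using k by (intro mult_mono) auto
    finally show ?thesis .
  qed
  have "(qr - a * m) * (nr - a * m) \<le> (qr - kr) * (nr - kr)"
    using kam am mq mn by (intro mult_mono) auto
  moreover have "(qr - a * m) * (nr - a * m) = (1 - a) * (nr * qr) + (a * m) * (a * m)"
  proof -
    have "a * m * (nr + qr) = a * (nr * qr)" unfolding m using nq by (simp add: field_simps)
    thus ?thesis by (simp add: algebra_simps)
  qed
  moreover have "(1 - a) * (nr * qr) \<ge> (1 - a) * ((a * m) * (a * m))"
  proof -
    have "(a * m) * (a * m) \<le> m * m" using am mpos a by (intro mult_mono) auto
    thus ?thesis using m2 a by (intro mult_left_mono) auto
  qed
  moreover have "(2 - a) * (kr * (kr + 1)) \<le> (2 - a) * ((a * m) * (a * m))"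
    using kk a by (intro mult_left_mono) auto
  ultimately show ?thesis by (simp add: algebra_simps)
qed


lemma upper_eps:
  fixes \<epsilon> m :: real and n q s s0 :: nat
  assumes n: "n \<ge> 1" and q: "q \<ge> 1" and e: "0 < \<epsilon>" "\<epsilon> \<le> 1/4"
    and m: "m = real n * real q / (real n + real q)"
    and s0: "s0 = nat \<lfloor>(1 - \<epsilon>) * m\<rfloor>" and s: "s = nat \<lceil>(1 - 2*\<epsilon>) * m\<rceil>"
    and s1: "1 \<le> s" and ss: "s \<le> s0"
  shows "real (Mq q n 1) \<le> real (card (disc_simplex q n)) / (\<epsilon> * (1 + \<epsilon>) ^ (s0 - s))
           + real (card (disc_simplex q (n - 1))) / real s"
proof -
  obtain S where S: "S \<subseteq> disc_simplex q n" "good q 1 S" "card S = Mq q n 1" by (rule Mq_obtain)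
  have mpos: "m > 0" using n q unfolding m by simp
  have mq: "m \<le> real q" using n q unfolding m by (simp add: field_simps)
  have mn: "m \<le> real n" using n q unfolding m by (simp add: field_simps)
  have s0m: "real s0 \<le> (1 - \<epsilon>) * m" unfolding s0 using e mpos by simp
  have s0n: "s0 \<le> n" using s0m mn e mpos
    by (smt (verit, best) mult_le_cancel_right2 of_nat_le_iff)
  have s0q: "s0 \<le> q" using s0m mq e mpos
    by (smt (verit, best) mult_le_cancel_right2 of_nat_le_iff)
  have A: "real (card S) \<le> real (card {x\<in>disc_simplex q n. card (supp q x) < s}) + real (card (disc_simplex q (n - 1))) / real s"
    by (rule upper_main[OF s1 S(1,2)])
  have B: "real (card {x\<in>disc_simplex q n. card (supp q x) < s}) \<le> (\<Sum>k\<in>{1..<s}. TT q n k)"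
  proof -
    have "card {x\<in>disc_simplex q n. card (supp q x) < s} \<le> (\<Sum>k\<in>{1..<s}. (q choose k) * ((n - 1) choose (k - 1)))"
      by (rule small_count[OF n])
    hence "real (card {x\<in>disc_simplex q n. card (supp q x) < s}) \<le> real (\<Sum>k\<in>{1..<s}. (q choose k) * ((n - 1) choose (k - 1)))"
      by (simp only: of_nat_le_iff)
    also have "\<dots> = (\<Sum>k\<in>{1..<s}. TT q n k)" unfolding TT_def by simp
    finally show ?thesis .
  qed
  have step: "(1 + \<epsilon>) * TT q n k \<le> TT q n (Suc k)" if k: "1 \<le> k" "k < s0" for k
  proof -
    have rc: "(2 - (1 - \<epsilon>)) * (real k * (real k + 1)) \<le> (real q - real k) * (real n - real k)"
      by (rule ratio_cond[of "1 - \<epsilon>" "real n" "real q" m "real k" "real s0"]) (use e n q m k s0m in auto)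
    have qk: "real (q - k) = real q - real k" "real (n - k) = real n - real k" using k s0n s0q by auto
    have eq: "TT q n (Suc k) * (real (Suc k) * real k) = TT q n k * (real (q - k) * real (n - k))"
      by (rule TT_step[OF k(1)])
    have "(1 + \<epsilon>) * TT q n k * (real (Suc k) * real k) = TT q n k * ((2 - (1 - \<epsilon>)) * (real k * (real k + 1)))"
      by (simp add: algebra_simps)
    also have "\<dots> \<le> TT q n k * ((real q - real k) * (real n - real k))"
      by (rule mult_left_mono[OF rc TT_nonneg])
    also have "\<dots> = TT q n (Suc k) * (real (Suc k) * real k)" using eq qk by simp
    finally have "(1 + \<epsilon>) * TT q n k * (real (Suc k) * real k) \<le> TT q n (Suc k) * (real (Suc k) * real k)" .
    moreover have "real (Suc k) * real k > 0" using k by simp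
    ultimately show ?thesis by (rule mult_right_le_imp_le)
  qed
  have C: "(\<Sum>k\<in>{1..<s}. TT q n k) \<le> TT q n s0 / ((1 + \<epsilon> - 1) * (1 + \<epsilon>) ^ (s0 - s))"
    by (rule tail_geom[OF _ _ TT_nonneg ss]) (use e step in auto)
  have D: "TT q n s0 \<le> real (card (disc_simplex q n))"
    using TT_le_binom[of s0 n q] s1 ss s0n disc_card[of q n] by simp
  have "TT q n s0 / ((1 + \<epsilon> - 1) * (1 + \<epsilon>) ^ (s0 - s)) \<le> real (card (disc_simplex q n)) / (\<epsilon> * (1 + \<epsilon>) ^ (s0 - s))"
  proof -
    have "1 + \<epsilon> - 1 = \<epsilon>" by simp
    moreover have "\<epsilon> * (1 + \<epsilon>) ^ (s0 - s) \<ge> 0" using e by simp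
    ultimately show ?thesis using D by (simp add: divide_right_mono)
  qed
  thus ?thesis using A B C S(3) by simp
qed


lemma nat_floor_bounds: "x \<ge> 0 \<Longrightarrow> real (nat \<lfloor>x\<rfloor>) \<le> x \<and> real (nat \<lfloor>x\<rfloor>) > x - 1"
proof -
  assume x: "x \<ge> 0"
  have "real (nat \<lfloor>x\<rfloor>) = real_of_int \<lfloor>x\<rfloor>" using x by simp
  thus ?thesis by linarith
qed

lemma nat_ceil_bounds: "x \<ge> 0 \<Longrightarrow> real (nat \<lceil>x\<rceil>) \<ge> x \<and> real (nat \<lceil>x\<rceil>) < x + 1"
proof -
  assume x: "x \<ge> 0"
  have "real (nat \<lceil>x\<rceil>) = real_of_int \<lceil>x\<rceil>" using x by simp
  thus ?thesis by linarith
qed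

lemma alg1: "(n::real) > 0 \<Longrightarrow> q > 0 \<Longrightarrow> D > 0 \<Longrightarrow> c > 0 \<Longrightarrow> q * (n / D) / (c * (n * q / (n + q))) = (n + q) / D / c"
  by (simp add: field_simps)

lemma card_ratio:
  assumes "n \<ge> 1" "q \<ge> 1"
  shows "real (card (disc_simplex q (n - 1))) / real (card (disc_simplex q n)) = real n / (real n + real q - 1)"
proof -
  have c1: "card (disc_simplex q n) = (n + q - 1) choose n" using disc_card by blast
  have c2: "card (disc_simplex q (n - 1)) = (n + q - 1 - 1) choose (n - 1)"
    using disc_card[of q "n - 1"] assms by (simp add: algebra_simps)
  have e: "n * ((n + q - 1) choose n) = (n + q - 1) * ((n + q - 1 - 1) choose (n - 1))"
    using times_binomial_minus1_eq[of n "n + q - 1"] assms by simp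
  have pos: "(n + q - 1) choose n > 0" using assms by simp
  have "real n * real ((n + q - 1) choose n) = real (n + q - 1) * real ((n + q - 1 - 1) choose (n - 1))"
    using e by (metis of_nat_mult)
  moreover have "real (n + q - 1) = real n + real q - 1" using assms by simp
  ultimately show ?thesis unfolding c1 c2 using pos assms
    by (simp add: field_simps)
qed

lemma MoL_upper:
  fixes qt \<epsilon> :: real and n q :: nat
  assumes qt: "qt > 0" and e: "0 < \<epsilon>" "\<epsilon> \<le> 1/4" and q: "q = nat \<lfloor>qt * real n\<rfloor>"
    and H1: "qt * real n \<ge> 2" and H2: "\<epsilon> * (qt / (2 + qt)) * real n \<ge> 2" and n: "n \<ge> 1"
  shows "real (Mq q n 1) / (real (card (disc_simplex q n)) / real q)
     \<le> qt * (1 + \<epsilon>)^2 / \<epsilon> * (real n / ((1 + \<epsilon>) powr (\<epsilon> * (qt / (2 + qt)))) ^ n) + (1 + 1 / real n) / (1 - 2 * \<epsilon>)"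
proof -
  define c1 where "c1 = qt / (2 + qt)"
  have c1pos: "c1 > 0" unfolding c1_def using qt by simp
  have qr: "real q \<le> qt * real n" "real q > qt * real n - 1"
    unfolding q using nat_floor_bounds[of "qt * real n"] qt by auto
  have q2: "2 * real q \<ge> qt * real n" using qr H1 by linarith
  have q1: "q \<ge> 1" using q2 H1 by linarith
  define m where "m = real n * real q / (real n + real q)"
  have mpos: "m > 0" unfolding m_def using n q1 by simp
  have mc: "m \<ge> c1 * real n"
  proof -
    have "c1 * real n * (real n + real q) \<le> real n * real q"
    proof -
      have "c1 * (real n + real q) \<le> real q"
        unfolding c1_def using qt q2 by (simp add: field_simps)
      hence "real n * (c1 * (real n + real q)) \<le> real n * real q" by (intro mult_left_mono) auto
      thus ?thesis by (simp add: algebra_simps)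
    qed
    thus ?thesis unfolding m_def using n q1 by (simp add: field_simps)
  qed
  have em2: "\<epsilon> * m \<ge> 2"
  proof -
    have "\<epsilon> * (c1 * real n) \<le> \<epsilon> * m" using mc e by (intro mult_left_mono) auto
    thus ?thesis using H2 unfolding c1_def by (simp add: mult.assoc)
  qed
  define s0 where "s0 = nat \<lfloor>(1 - \<epsilon>) * m\<rfloor>"
  define s where "s = nat \<lceil>(1 - 2*\<epsilon>) * m\<rceil>"
  have pm: "(1 - 2*\<epsilon>) * m > 0" "(1 - \<epsilon>) * m > 0" using e mpos by auto
  have sr: "real s \<ge> (1 - 2*\<epsilon>) * m" "real s < (1 - 2*\<epsilon>) * m + 1"
    unfolding s_def using nat_ceil_bounds[of "(1 - 2*\<epsilon>) * m"] pm by auto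
  have s0r: "real s0 \<le> (1 - \<epsilon>) * m" "real s0 > (1 - \<epsilon>) * m - 1"
    unfolding s0_def using nat_floor_bounds[of "(1 - \<epsilon>) * m"] pm by auto
  have s1: "s \<ge> 1" using sr pm by simp
  have ss: "s \<le> s0" using sr s0r em2 by (simp add: algebra_simps)
  define d where "d = s0 - s"
  have dr: "real d \<ge> \<epsilon> * c1 * real n - 2"
  proof -
    have "real d = real s0 - real s" unfolding d_def using ss by simp
    also have "\<dots> \<ge> \<epsilon> * m - 2" using sr s0r by (simp add: algebra_simps)
    finally have "real d \<ge> \<epsilon> * m - 2" .
    moreover have "\<epsilon> * (c1 * real n) \<le> \<epsilon> * m" using mc e by (intro mult_left_mono) auto
    ultimately show ?thesis by (simp add: mult.assoc)
  qed
  define D where "D = real (card (disc_simplex q n))"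
  define D' where "D' = real (card (disc_simplex q (n - 1)))"
  have Dpos: "D > 0" unfolding D_def using disc_card[of q n] q1 by simp
  have up: "real (Mq q n 1) \<le> D / (\<epsilon> * (1 + \<epsilon>) ^ d) + D' / real s"
    unfolding D_def D'_def d_def
    by (rule upper_eps[OF n q1 e m_def s0_def s_def s1 ss])
  have "real (Mq q n 1) / (D / real q) = real (Mq q n 1) * real q / D" using Dpos q1 by simp
  also have "\<dots> \<le> (D / (\<epsilon> * (1 + \<epsilon>) ^ d) + D' / real s) * real q / D"
    using up Dpos q1 by (intro divide_right_mono mult_right_mono) auto
  also have "\<dots> = real q / (\<epsilon> * (1 + \<epsilon>) ^ d) + real q * (D' / D) / real s"
    using Dpos by (simp add: field_simps)
  also have "D' / D = real n / (real n + real q - 1)" unfolding D_def D'_def by (rule card_ratio[OF n q1])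
  finally have main: "real (Mq q n 1) / (D / real q) \<le> real q / (\<epsilon> * (1 + \<epsilon>) ^ d) + real q * (real n / (real n + real q - 1)) / real s" .
  have t2: "real q * (real n / (real n + real q - 1)) / real s \<le> (1 + 1 / real n) / (1 - 2 * \<epsilon>)"
  proof -
    have den: "real n + real q - 1 > 0" using n q1 by simp
    have "real q * (real n / (real n + real q - 1)) / real s \<le> real q * (real n / (real n + real q - 1)) / ((1 - 2*\<epsilon>) * m)"
      using sr pm den q1 by (intro divide_left_mono) auto
    also have "\<dots> = (real n + real q) / (real n + real q - 1) / (1 - 2 * \<epsilon>)"
      unfolding m_def by (rule alg1) (use n q1 den e in auto)
    also have "\<dots> \<le> (1 + 1 / real n) / (1 - 2 * \<epsilon>)"
    proof (rule divide_right_mono)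
      show "(real n + real q) / (real n + real q - 1) \<le> 1 + 1 / real n"
        using den n q1 by (simp add: field_simps)
    qed (use e in auto)
    finally show ?thesis .
  qed
  define b where "b = (1 + \<epsilon>) powr (\<epsilon> * c1)"
  have bpos: "b > 0" unfolding b_def using e by simp
  have t1: "real q / (\<epsilon> * (1 + \<epsilon>) ^ d) \<le> qt * (1 + \<epsilon>)^2 / \<epsilon> * (real n / b ^ n)"
  proof -
    have "(1 + \<epsilon>) ^ d = (1 + \<epsilon>) powr real d" using e by (simp add: powr_realpow)
    also have "\<dots> \<ge> (1 + \<epsilon>) powr (\<epsilon> * c1 * real n - 2)" using dr e by (intro powr_mono) auto
    finally have p1: "(1 + \<epsilon>) ^ d \<ge> (1 + \<epsilon>) powr (\<epsilon> * c1 * real n - 2)" .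
    have "(1 + \<epsilon>) powr (\<epsilon> * c1 * real n - 2) = (1 + \<epsilon>) powr (\<epsilon> * c1 * real n) / (1 + \<epsilon>) powr 2"
      by (rule powr_diff)
    also have "(1 + \<epsilon>) powr (\<epsilon> * c1 * real n) = b ^ n"
    proof -
      have "b ^ n = b powr real n" using bpos by (simp add: powr_realpow)
      also have "\<dots> = (1 + \<epsilon>) powr (\<epsilon> * c1 * real n)" unfolding b_def by (simp add: powr_powr)
      finally show ?thesis by simp
    qed
    also have "(1 + \<epsilon>) powr (2::real) = (1 + \<epsilon>)^2" using powr_realpow[of "1 + \<epsilon>" 2] e by simp
    finally have p2: "(1 + \<epsilon>) ^ d \<ge> b ^ n / (1 + \<epsilon>)^2" using p1 by simp
    have bn: "b ^ n > 0" using bpos by simp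
    have "real q / (\<epsilon> * (1 + \<epsilon>) ^ d) \<le> real q / (\<epsilon> * (b ^ n / (1 + \<epsilon>)^2))"
      using p2 e bn by (intro divide_left_mono mult_left_mono) auto
    also have "\<dots> \<le> qt * real n / (\<epsilon> * (b ^ n / (1 + \<epsilon>)^2))"
      using qr e bn by (intro divide_right_mono) auto
    also have "\<dots> = qt * (1 + \<epsilon>)^2 / \<epsilon> * (real n / b ^ n)" using e bn by (simp add: field_simps)
    finally show ?thesis .
  qed
  from t1 have t1': "real q / (\<epsilon> * (1 + \<epsilon>) ^ d) \<le> qt * (1 + \<epsilon>)^2 / \<epsilon> * (real n / ((1 + \<epsilon>) powr (\<epsilon> * (qt / (2 + qt)))) ^ n)"
    by (simp only: b_def c1_def)
  show ?thesis using main t1' t2 unfolding D_def by linarith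
qed

lemma ev_lin: "c > 0 \<Longrightarrow> eventually (\<lambda>n::nat. c * real n \<ge> C) sequentially"
proof -
  assume c: "c > 0"
  show ?thesis using eventually_ge_at_top[of "nat \<lceil>C / c\<rceil>"]
  proof eventually_elim
    case (elim n)
    hence "real n \<ge> C / c" by linarith
    thus ?case using c by (simp add: field_simps)
  qed
qed

lemma one_le_div: "(X::real) \<le> M \<Longrightarrow> 0 < X \<Longrightarrow> 1 \<le> M / X" by (simp add: le_divide_eq)

lemma MoL_limit:
  fixes qt :: real
  assumes qt: "qt > 0"
  shows "(\<lambda>n. real (Mq (nat \<lfloor>qt * real n\<rfloor>) n 1) / (real (card (disc_simplex (nat \<lfloor>qt * real n\<rfloor>) n)) / real (nat \<lfloor>qt * real n\<rfloor>))) \<longlonglongrightarrow> 1"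
    (is "?f \<longlonglongrightarrow> 1")
proof (rule order_tendstoI)
  have evq: "eventually (\<lambda>n. nat \<lfloor>qt * real n\<rfloor> \<ge> 1) sequentially"
    using ev_lin[OF qt, of 1]
  proof eventually_elim
    case (elim n) thus ?case by linarith
  qed
  have lb: "eventually (\<lambda>n. ?f n \<ge> 1) sequentially"
    using evq
  proof eventually_elim
    case (elim n)
    define q where "q = nat \<lfloor>qt * real n\<rfloor>"
    have q1: "q \<ge> 1" using elim unfolding q_def .
    have pos: "real (card (disc_simplex q n)) / real q > 0" using disc_card[of q n] q1 by simp
    have "real (card (disc_simplex q n)) / real q \<le> real (Mq q n 1)" by (rule lower_bound[OF q1])
    hence "1 \<le> real (Mq q n 1) / (real (card (disc_simplex q n)) / real q)"
      using pos by (rule one_le_div)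
    thus ?case unfolding q_def .
  qed
  show "eventually (\<lambda>n. a < ?f n) sequentially" if "a < 1" for a
    using lb by eventually_elim (use that in auto)
  show "eventually (\<lambda>n. ?f n < a) sequentially" if a: "a > 1" for a
  proof -
    define \<epsilon> where "\<epsilon> = min (1/4) ((a - 1) / 8)"
    have e: "0 < \<epsilon>" "\<epsilon> \<le> 1/4" "\<epsilon> \<le> (a - 1) / 8" using a unfolding \<epsilon>_def by (auto simp del: min_less_iff_conj)
      (simp_all add: min_def)
    define c1 where "c1 = qt / (2 + qt)"
    have c1: "c1 > 0" using qt unfolding c1_def by simp
    define b where "b = (1 + \<epsilon>) powr (\<epsilon> * c1)"
    have b1: "b > 1" unfolding b_def using e c1 by simp
    define U where "U n = qt * (1 + \<epsilon>)^2 / \<epsilon> * (real n / b ^ n) + (1 + 1 / real n) / (1 - 2 * \<epsilon>)" for n :: nat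
    have "U \<longlonglongrightarrow> qt * (1 + \<epsilon>)^2 / \<epsilon> * 0 + (1 + 0) / (1 - 2 * \<epsilon>)"
    proof -
      have l1: "(\<lambda>n. real n / b ^ n) \<longlonglongrightarrow> 0" using lim_n_over_pown[of b] b1 by simp
      have l2: "(\<lambda>n. 1 / real n) \<longlonglongrightarrow> 0" by (rule lim_1_over_n)
      have ne: "1 - 2 * \<epsilon> \<noteq> 0" using e by simp
      show ?thesis unfolding U_def
        by (intro tendsto_add tendsto_mult tendsto_const tendsto_divide[OF _ tendsto_const ne] l1 l2)
    qed
    hence Ulim: "U \<longlonglongrightarrow> 1 / (1 - 2 * \<epsilon>)" by simp
    have "1 / (1 - 2 * \<epsilon>) < a"
    proof -
      have "1 \<le> (1 + 4 * \<epsilon>) * (1 - 2 * \<epsilon>)" using e by (simp add: algebra_simps power2_eq_square)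
      hence "1 / (1 - 2 * \<epsilon>) \<le> 1 + 4 * \<epsilon>" using e by (simp add: divide_le_eq)
      also have "\<dots> < a"
      proof -
        have "8 * \<epsilon> \<le> a - 1" using e(3) by (simp add: field_simps)
        thus ?thesis using e a by linarith
      qed
      finally show ?thesis .
    qed
    hence evU: "eventually (\<lambda>n. U n < a) sequentially" by (rule order_tendstoD(2)[OF Ulim])
    have evH1: "eventually (\<lambda>n. qt * real n \<ge> 2) sequentially" by (rule ev_lin[OF qt])
    have evH2: "eventually (\<lambda>n. (\<epsilon> * (qt / (2 + qt))) * real n \<ge> 2) sequentially"
      by (rule ev_lin) (use e qt in simp)
    have evn: "eventually (\<lambda>n::nat. n \<ge> 1) sequentially" by (rule eventually_ge_at_top)
    show ?thesis using evU evH1 evH2 evn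
    proof eventually_elim
      case (elim n)
      have "?f n \<le> U n" unfolding U_def b_def c1_def
        by (rule MoL_upper[OF qt e(1,2) refl elim(2) _ elim(4)]) (use elim(3) in \<open>simp add: mult.assoc\<close>)
      thus ?case using elim(1) by simp
    qed
  qed
qed


definition gg :: "real \<Rightarrow> real \<Rightarrow> real" where
  "gg n x = (n + x) * ln (n + x) - x * ln x"

lemma gg_deriv: "n > 0 \<Longrightarrow> x > 0 \<Longrightarrow> ((gg n) has_real_derivative (ln (n + x) - ln x)) (at x)"
  unfolding gg_def
  by (rule derivative_eq_intros refl | simp)+

lemma lnmono: "0 < n \<Longrightarrow> 0 < x \<Longrightarrow> x \<le> y \<Longrightarrow> ln (1 + n / y) \<le> ln (1 + n / (x::real))"
proof -
  assume a: "0 < n" "0 < x" "x \<le> y"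
  have "n / y \<le> n / x" using a by (intro divide_left_mono) auto
  moreover have "n / y \<ge> 0" using a by simp
  ultimately show ?thesis by (intro ln_mono) auto
qed

lemma mvt_bound:
  fixes n a b :: real
  assumes n: "n > 0" and b: "b > 1" and ab: "b - 1 \<le> a" "a \<le> b"
  shows "\<bar>gg n a - gg n b - (a - b) * ln (1 + n / b)\<bar> \<le> ln (1 + n / (b - 1)) - ln (1 + n / b)"
proof (cases "a = b")
  case True
  have "ln (1 + n / b) \<le> ln (1 + n / (b - 1))" using n b by (intro lnmono) auto
  thus ?thesis using True by simp
next
  case False
  hence ab': "a < b" using ab by simp
  have apos: "a > 0" using ab b by simp
  obtain z where z: "a < z" "z < b" "gg n b - gg n a = (b - a) * (ln (n + z) - ln z)"
    using MVT2[OF ab', of "gg n" "\<lambda>x. ln (n + x) - ln x"] gg_deriv[OF n] apos by force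
  have zpos: "z > 0" using z apos by simp
  have lz: "ln (n + z) - ln z = ln (1 + n / z)"
  proof -
    have "1 + n / z = (n + z) / z" using zpos by (simp add: field_simps)
    thus ?thesis using zpos n by (simp add: ln_div)
  qed
  have m1: "ln (1 + n / b) \<le> ln (1 + n / z)" using z zpos n by (intro lnmono) auto
  have m2: "ln (1 + n / z) \<le> ln (1 + n / (b - 1))"
  proof -
    have "b - 1 < z" using z ab by simp
    thus ?thesis using b n by (intro lnmono) auto
  qed
  have "gg n a - gg n b - (a - b) * ln (1 + n / b) = (b - a) * (ln (1 + n / b) - ln (1 + n / z))"
    using z(3) lz by (simp add: algebra_simps)
  hence "\<bar>gg n a - gg n b - (a - b) * ln (1 + n / b)\<bar> = \<bar>(b - a) * (ln (1 + n / b) - ln (1 + n / z))\<bar>" by simp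
  also have "\<dots> = (b - a) * (ln (1 + n / z) - ln (1 + n / b))"
  proof -
    have "(b - a) * (ln (1 + n / b) - ln (1 + n / z)) \<le> 0" using m1 ab' by (intro mult_nonneg_nonpos) auto
    hence "\<bar>(b - a) * (ln (1 + n / b) - ln (1 + n / z))\<bar> = - ((b - a) * (ln (1 + n / b) - ln (1 + n / z)))" by simp
    also have "\<dots> = (b - a) * (ln (1 + n / z) - ln (1 + n / b))" by (simp add: algebra_simps)
    finally show ?thesis by simp
  qed
  also have "\<dots> \<le> 1 * (ln (1 + n / (b - 1)) - ln (1 + n / b))"
    using ab m1 m2 ab' by (intro mult_mono) auto
  finally show ?thesis by simp
qed

lemma alg2: "(N::real) > 0 \<Longrightarrow> q > 0 \<Longrightarrow> a > 0 \<Longrightarrow> b > 0 \<Longrightarrow> F / (a * b) / q = (N * F) / (a * (q * b) * N)"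
  by (simp add: field_simps)

lemma L_fact:
  assumes n: "n \<ge> 1" and q: "q \<ge> 1"
  shows "real (card (disc_simplex q n)) / real q = fact (n + q) / (fact n * fact q * real (n + q))"
proof -
  have c: "card (disc_simplex q n) = (n + q - 1) choose n" using disc_card by blast
  have "real ((n + q - 1) choose n) = fact (n + q - 1) / (fact n * fact (n + q - 1 - n))"
    by (rule binomial_fact) (use q in simp)
  also have "n + q - 1 - n = q - 1" by simp
  finally have b: "real ((n + q - 1) choose n) = fact (n + q - 1) / (fact n * fact (q - 1))" .
  have f1: "(fact (n + q) :: real) = real (n + q) * fact (n + q - 1)" using q by (simp add: fact_reduce)
  have f2: "(fact q :: real) = real q * fact (q - 1)" using q by (simp add: fact_reduce)
  have pN: "real (n + q) > 0" using n by simp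
  have pq: "real q > 0" using q by simp
  show ?thesis unfolding c b f1 f2 by (rule alg2[OF pN pq]) auto
qed

lemma lnL_formula:
  assumes n: "n \<ge> 1" and q: "q \<ge> 1"
  shows "ln (real (card (disc_simplex q n)) / real q) =
    sa (n + q) - sa n - sa q + (real (n + q) + 1/2) * ln (real (n + q)) - (real n + 1/2) * ln (real n)
    - (real q + 1/2) * ln (real q) - ln (real (n + q))"
proof -
  have "ln (real (card (disc_simplex q n)) / real q) = ln (fact (n + q)) - ln (fact n) - ln (fact q) - ln (real (n + q))"
    unfolding L_fact[OF n q] using n q by (simp add: ln_div ln_mult)
  also have "\<dots> = sa (n + q) - sa n - sa q + (real (n + q) + 1/2) * ln (real (n + q)) - (real n + 1/2) * ln (real n)
    - (real q + 1/2) * ln (real q) - ln (real (n + q))"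
    using ln_fact_sa[of "n + q"] ln_fact_sa[of n] ln_fact_sa[of q] n q by simp
  finally show ?thesis .
qed

lemma be_ln: "bin_entropy p * ln 2 = - p * ln p - (1 - p) * ln (1 - p)"
proof -
  have l2: "ln (2::real) \<noteq> 0" by simp
  have "bin_entropy p * ln 2 = (- p * (ln p / ln 2) - (1 - p) * (ln (1 - p) / ln 2)) * ln 2"
    unfolding bin_entropy_def log_def ..
  also have "\<dots> = - p * ln p - (1 - p) * ln (1 - p)" using l2 by (simp add: field_simps)
  finally show ?thesis .
qed

lemma alg3: "(d::real) \<noteq> 0 \<Longrightarrow> - (1 / d) * (- A) - (qt / d) * (B - A) = (A - qt * B + qt * A) / d"
  by (simp add: field_simps)

lemma H_ln:
  assumes qt: "qt > 0"
  shows "(1 + qt) * bin_entropy (1 / (1 + qt)) * ln 2 = (1 + qt) * ln (1 + qt) - qt * ln qt"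
proof -
  have p1: "ln (1 / (1 + qt)) = - ln (1 + qt)" using qt by (simp add: ln_div)
  have p2: "1 - 1 / (1 + qt) = qt / (1 + qt)" using qt by (simp add: field_simps)
  have p3: "ln (qt / (1 + qt)) = ln qt - ln (1 + qt)" using qt by (simp add: ln_div)
  have "bin_entropy (1 / (1 + qt)) * ln 2 = - (1 / (1 + qt)) * ln (1 / (1 + qt)) - (qt / (1 + qt)) * ln (qt / (1 + qt))"
    using be_ln[of "1 / (1 + qt)"] unfolding p2 .
  also have "\<dots> = (ln (1 + qt) - qt * ln qt + qt * ln (1 + qt)) / (1 + qt)"
    unfolding p1 p3 by (rule alg3) (use qt in simp)
  finally have "bin_entropy (1 / (1 + qt)) * ln 2 = (ln (1 + qt) - qt * ln qt + qt * ln (1 + qt)) / (1 + qt)" .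
  hence "(1 + qt) * (bin_entropy (1 / (1 + qt)) * ln 2) = ln (1 + qt) - qt * ln qt + qt * ln (1 + qt)"
    using qt by (simp add: field_simps)
  thus ?thesis by (simp add: algebra_simps)
qed

lemma lnT_formula:
  assumes qt: "qt > 0" and n: "n \<ge> 1"
  shows "ln (2 powr (real n * (1 + qt) * bin_entropy (1 / (1 + qt)))
        / (sqrt (2 * pi) * real n powr (3/2)) * (1 / qt) * (1 + 1 / qt) powr (r - 1/2))
     = real n * ((1 + qt) * ln (1 + qt) - qt * ln qt) - ln (2 * pi) / 2 - 3/2 * ln (real n) - ln qt
       + (r - 1/2) * ln (1 + 1 / qt)"
proof -
  define X where "X = real n * (1 + qt) * bin_entropy (1 / (1 + qt))"
  have np: "real n > 0" using n by simp
  have a1: "ln (2 powr X) = X * ln 2" by simp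
  have a2: "X * ln 2 = real n * ((1 + qt) * ln (1 + qt) - qt * ln qt)"
    unfolding X_def using H_ln[OF qt] by (simp add: mult.assoc)
  have a3: "ln (sqrt (2 * pi) * real n powr (3/2)) = ln (2 * pi) / 2 + 3/2 * ln (real n)"
    using np by (simp add: ln_mult ln_sqrt)
  have a4: "ln ((1 + 1 / qt) powr (r - 1/2)) = (r - 1/2) * ln (1 + 1 / qt)" by simp
  have b1: "1 + 1 / qt > 0" using qt by (simp add: add_pos_pos)
  have pos: "2 powr X > 0" "sqrt (2 * pi) * real n powr (3/2) > 0" "1 / qt > 0" "(1 + 1 / qt) powr (r - 1/2) > 0"
    using np qt b1 by auto
  have "ln (2 powr X / (sqrt (2 * pi) * real n powr (3/2)) * (1 / qt) * (1 + 1 / qt) powr (r - 1/2))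
     = ln (2 powr X) - ln (sqrt (2 * pi) * real n powr (3/2)) + ln (1 / qt) + ln ((1 + 1 / qt) powr (r - 1/2))"
    using pos np by (simp add: ln_mult ln_div)
  also have "\<dots> = real n * ((1 + qt) * ln (1 + qt) - qt * ln qt) - ln (2 * pi) / 2 - 3/2 * ln (real n) - ln qt
       + (r - 1/2) * ln (1 + 1 / qt)"
    unfolding a1 a2 a3 a4 using qt by (simp add: ln_div)
  finally show ?thesis unfolding X_def .
qed

lemma decomp:
  fixes qt :: real and n q :: nat
  assumes qt: "qt > 0" and n: "n \<ge> 1" and q: "q \<ge> 1"
  defines "Q0 \<equiv> qt * real n"
  shows "ln (real (card (disc_simplex q n)) / real q) -
     ln (2 powr (real n * (1 + qt) * bin_entropy (1 / (1 + qt)))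
        / (sqrt (2 * pi) * real n powr (3/2)) * (1 / qt) * (1 + 1 / qt) powr ((real q - Q0) - 1/2))
   = (sa (n + q) - sa n - sa q + ln (2 * pi) / 2)
   + (gg (real n) (real q) - gg (real n) Q0 - (real q - Q0) * ln (1 + real n / Q0))
   + (- (1/2) * ln ((real n + real q) / real n) - (1/2) * ln (real q / real n) + ln qt + (1/2) * ln (1 + 1 / qt))"
proof -
  have np: "real n > 0" and qp: "real q > 0" using n q by auto
  have e1: "ln (real (card (disc_simplex q n)) / real q) =
    sa (n + q) - sa n - sa q + (real n + real q + 1/2) * ln (real n + real q) - (real n + 1/2) * ln (real n)
    - (real q + 1/2) * ln (real q) - ln (real n + real q)"
    using lnL_formula[OF n q] by simp
  note e2 = lnT_formula[OF qt n, of "real q - Q0"]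
  have g1: "gg (real n) (real q) = (real n + real q) * ln (real n + real q) - real q * ln (real q)"
    unfolding gg_def ..
  have l1: "ln (real n + Q0) = ln (real n) + ln (1 + qt)"
  proof -
    have "real n + Q0 = real n * (1 + qt)" unfolding Q0_def by (simp add: algebra_simps)
    thus ?thesis using np qt by (simp add: ln_mult)
  qed
  have l2: "ln Q0 = ln qt + ln (real n)" unfolding Q0_def using np qt by (simp add: ln_mult)
  have g2: "gg (real n) Q0 = (real n + Q0) * (ln (real n) + ln (1 + qt)) - Q0 * (ln qt + ln (real n))"
    unfolding gg_def l1 l2 ..
  have l3: "real n / Q0 = 1 / qt" unfolding Q0_def using np qt by simp
  have l4: "ln ((real n + real q) / real n) = ln (real n + real q) - ln (real n)" using np qp by (simp add: ln_div)
  have l5: "ln (real q / real n) = ln (real q) - ln (real n)" using np qp by (simp add: ln_div)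
  show ?thesis unfolding e1 e2 g1 g2 l3 l4 l5 unfolding Q0_def by (simp add: algebra_simps)
qed

lemma ev_lin2: "c > 0 \<Longrightarrow> eventually (\<lambda>n::nat. c * real n \<ge> C) sequentially"
proof -
  assume c: "c > 0"
  show ?thesis using eventually_ge_at_top[of "nat \<lceil>C / c\<rceil>"]
  proof eventually_elim
    case (elim n)
    hence "real n \<ge> C / c" by linarith
    thus ?case using c by (simp add: field_simps)
  qed
qed

lemma LT_limit:
  fixes qt :: real
  assumes qt: "qt > 0"
  shows "(\<lambda>n. (real (card (disc_simplex (nat \<lfloor>qt * real n\<rfloor>) n)) / real (nat \<lfloor>qt * real n\<rfloor>)) /
     (2 powr (real n * (1 + qt) * bin_entropy (1 / (1 + qt)))
        / (sqrt (2 * pi) * real n powr (3/2)) * (1 / qt)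
        * (1 + 1 / qt) powr ((of_int \<lfloor>qt * real n\<rfloor> - qt * real n) - 1/2))) \<longlonglongrightarrow> 1"
proof -
  define q where "q n = nat \<lfloor>qt * real n\<rfloor>" for n
  define L where "L n = real (card (disc_simplex (q n) n)) / real (q n)" for n
  define T where "T n = 2 powr (real n * (1 + qt) * bin_entropy (1 / (1 + qt)))
        / (sqrt (2 * pi) * real n powr (3/2)) * (1 / qt)
        * (1 + 1 / qt) powr ((of_int \<lfloor>qt * real n\<rfloor> - qt * real n) - 1/2)" for n
  define A where "A n = sa (n + q n) - sa n - sa (q n) + ln (2 * pi) / 2" for n
  define B where "B n = gg (real n) (real (q n)) - gg (real n) (qt * real n) - (real (q n) - qt * real n) * ln (1 + real n / (qt * real n))" for n
  define C where "C n = - (1/2) * ln ((real n + real (q n)) / real n) - (1/2) * ln (real (q n) / real n) + ln qt + (1/2) * ln (1 + 1 / qt)" for n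
  define E where "E n = ln (1 + real n / (qt * real n - 1)) - ln (1 + real n / (qt * real n))" for n
  have qb: "real (q n) \<le> qt * real n" "real (q n) > qt * real n - 1" "real (q n) = of_int \<lfloor>qt * real n\<rfloor>" for n
  proof -
    have x: "qt * real n \<ge> 0" using qt by simp
    have "real (nat \<lfloor>qt * real n\<rfloor>) = of_int \<lfloor>qt * real n\<rfloor>" using x by simp
    thus "real (q n) \<le> qt * real n" "real (q n) > qt * real n - 1" "real (q n) = of_int \<lfloor>qt * real n\<rfloor>"
      unfolding q_def by linarith+
  qed
  have ev: "eventually (\<lambda>n. n \<ge> 1 \<and> q n \<ge> 1 \<and> qt * real n \<ge> 2) sequentially"
    using eventually_ge_at_top[of "1::nat"] ev_lin2[OF qt, of 2]
  proof eventually_elim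
    case (elim n)
    hence "real (q n) > 1" using qb(2)[of n] by linarith
    thus ?case using elim by simp
  qed
  have evd: "eventually (\<lambda>n. ln (L n) - ln (T n) = A n + B n + C n) sequentially"
    using ev
  proof eventually_elim
    case (elim n)
    have "T n = 2 powr (real n * (1 + qt) * bin_entropy (1 / (1 + qt)))
        / (sqrt (2 * pi) * real n powr (3/2)) * (1 / qt) * (1 + 1 / qt) powr ((real (q n) - qt * real n) - 1/2)"
      unfolding T_def qb(3)[of n] ..
    thus ?case unfolding L_def A_def B_def C_def using decomp[OF qt, of n "q n"] elim by simp
  qed
  have qtop: "filterlim q at_top sequentially"
    unfolding filterlim_at_top
  proof
    fix Z :: nat
    show "eventually (\<lambda>n. Z \<le> q n) sequentially"
      using ev_lin2[OF qt, of "real Z + 1"]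
    proof eventually_elim
      case (elim n)
      thus ?case using qb(2)[of n] by linarith
    qed
  qed
  have Ntop: "filterlim (\<lambda>n. n + q n) at_top sequentially"
    unfolding filterlim_at_top
  proof
    fix Z :: nat
    show "eventually (\<lambda>n. Z \<le> n + q n) sequentially"
      using eventually_ge_at_top[of Z] by eventually_elim simp
  qed
  define c where "c = ln (2 * pi) / 2"
  have sl: "sa \<longlonglongrightarrow> c" unfolding c_def by (rule sa_limit)
  have Alim: "A \<longlonglongrightarrow> 0"
  proof -
    have "(\<lambda>n. sa (n + q n)) \<longlonglongrightarrow> c" using filterlim_compose[OF sl Ntop] by simp
    moreover have "(\<lambda>n. sa (q n)) \<longlonglongrightarrow> c" using filterlim_compose[OF sl qtop] by simp
    ultimately have "A \<longlonglongrightarrow> c - c - c + c" unfolding A_def c_def[symmetric]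
      by (intro tendsto_intros sl)
    thus ?thesis by simp
  qed
  have qn: "(\<lambda>n. real (q n) / real n) \<longlonglongrightarrow> qt"
  proof (rule tendsto_sandwich)
    show "eventually (\<lambda>n. qt - 1 / real n \<le> real (q n) / real n) sequentially"
      using eventually_ge_at_top[of "1::nat"]
    proof eventually_elim
      case (elim n)
      hence np: "real n > 0" by simp
      have "qt - 1 / real n = (qt * real n - 1) / real n" using np by (simp add: field_simps)
      also have "\<dots> \<le> real (q n) / real n" using qb(2)[of n] np by (intro divide_right_mono) auto
      finally show ?case .
    qed
    show "eventually (\<lambda>n. real (q n) / real n \<le> qt) sequentially"
      using eventually_ge_at_top[of "1::nat"]
    proof eventually_elim
      case (elim n)
      hence np: "real n > 0" by simp
      have "real (q n) / real n \<le> qt * real n / real n" using qb(1)[of n] np by (intro divide_right_mono) auto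
      thus ?case using np by simp
    qed
    show "(\<lambda>n. qt - 1 / real n) \<longlonglongrightarrow> qt" using tendsto_diff[OF tendsto_const lim_1_over_n, of qt] by simp
  qed simp
  have Clim: "C \<longlonglongrightarrow> 0"
  proof -
    have ev1: "eventually (\<lambda>n. (real n + real (q n)) / real n = 1 + real (q n) / real n) sequentially"
      using eventually_ge_at_top[of "1::nat"] by eventually_elim (simp add: field_simps)
    have "(\<lambda>n. 1 + real (q n) / real n) \<longlonglongrightarrow> 1 + qt" using qn by (intro tendsto_intros)
    hence l1: "(\<lambda>n. (real n + real (q n)) / real n) \<longlonglongrightarrow> 1 + qt"
      by (rule Lim_transform_eventually) (use ev1 in \<open>auto elim: eventually_mono\<close>)
    have "C \<longlonglongrightarrow> - (1/2) * ln (1 + qt) - (1/2) * ln qt + ln qt + (1/2) * ln (1 + 1 / qt)"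
      unfolding C_def using qt by (intro tendsto_intros l1 qn) auto
    moreover have "ln (1 + 1 / qt) = ln (1 + qt) - ln qt"
    proof -
      have "1 + 1 / qt = (1 + qt) / qt" using qt by (simp add: field_simps)
      thus ?thesis using qt by (simp add: ln_div)
    qed
    ultimately show ?thesis by (simp add: algebra_simps)
  qed
  have Elim: "E \<longlonglongrightarrow> 0"
  proof -
    have ev1: "eventually (\<lambda>n. E n = ln (1 + 1 / (qt - 1 / real n)) - ln (1 + 1 / qt)) sequentially"
      using ev
    proof eventually_elim
      case (elim n)
      hence np: "real n > 0" by simp
      have a: "real n / (qt * real n - 1) = 1 / (qt - 1 / real n)" using np by (simp add: field_simps)
      have b: "real n / (qt * real n) = 1 / qt" using np by simp
      show ?case unfolding E_def a b ..
    qed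
    have "(\<lambda>n. ln (1 + 1 / (qt - 1 / real n)) - ln (1 + 1 / qt)) \<longlonglongrightarrow> ln (1 + 1 / (qt - 0)) - ln (1 + 1 / qt)"
    proof -
      have b1: "1 + 1 / qt > 0" using qt by (simp add: add_pos_pos)
      show ?thesis using qt b1 by (intro tendsto_intros lim_1_over_n) auto
    qed
    hence "(\<lambda>n. ln (1 + 1 / (qt - 1 / real n)) - ln (1 + 1 / qt)) \<longlonglongrightarrow> 0" by simp
    thus ?thesis by (rule Lim_transform_eventually) (use ev1 in \<open>auto elim: eventually_mono\<close>)
  qed
  have Blim: "B \<longlonglongrightarrow> 0"
  proof (rule Lim_null_comparison[OF _ Elim])
    show "eventually (\<lambda>n. norm (B n) \<le> E n) sequentially"
      using ev
    proof eventually_elim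
      case (elim n)
      have np: "real n > 0" using elim by simp
      show ?case unfolding B_def E_def real_norm_def
        by (rule mvt_bound[OF np]) (use elim qb[of n] in auto)
    qed
  qed
  have D: "(\<lambda>n. ln (L n) - ln (T n)) \<longlonglongrightarrow> 0"
  proof -
    have "(\<lambda>n. A n + B n + C n) \<longlonglongrightarrow> 0 + 0 + 0" by (intro tendsto_add Alim Blim Clim)
    hence "(\<lambda>n. A n + B n + C n) \<longlonglongrightarrow> 0" by simp
    thus ?thesis by (rule Lim_transform_eventually) (use evd in \<open>auto elim: eventually_mono\<close>)
  qed
  have evp: "eventually (\<lambda>n. L n / T n = exp (ln (L n) - ln (T n))) sequentially"
    using ev
  proof eventually_elim
    case (elim n)
    have "n \<le> n + q n - 1" using elim by linarith
    hence bp: "0 < (n + q n - 1) choose n" by (simp add: zero_less_binomial_iff)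
    have Lp: "L n > 0" unfolding L_def using disc_card[of "q n" n] elim bp by (simp add: divide_pos_pos)
    have b1: "1 + 1 / qt > 0" using qt by (simp add: add_pos_pos)
    have Tp: "T n > 0" unfolding T_def using qt b1 elim by (auto intro!: mult_pos_pos divide_pos_pos)
    show ?case using Lp Tp by (simp add: exp_diff)
  qed
  have "(\<lambda>n. exp (ln (L n) - ln (T n))) \<longlonglongrightarrow> exp 0" by (intro tendsto_intros D)
  hence "(\<lambda>n. L n / T n) \<longlonglongrightarrow> 1"
    by simp (rule Lim_transform_eventually, assumption, use evp in \<open>auto elim: eventually_mono\<close>)
  thus ?thesis unfolding L_def T_def q_def .
qed


theorem mainTheorem20:
  fixes qt :: real
  assumes "qt > 0"
  shows "(\<lambda>n::nat. real (Mq (nat \<lfloor>qt * real n\<rfloor>) n 1)) \<sim>[at_top]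
    (\<lambda>n::nat. 2 powr (real n * (1 + qt) * bin_entropy (1 / (1 + qt)))
        / (sqrt (2 * pi) * real n powr (3/2)) * (1 / qt)
        * (1 + 1 / qt) powr ((of_int \<lfloor>qt * real n\<rfloor> - qt * real n) - 1/2))"
proof -
  define q where "q n = nat \<lfloor>qt * real n\<rfloor>" for n
  define M where "M n = real (Mq (q n) n 1)" for n
  define L where "L n = real (card (disc_simplex (q n) n)) / real (q n)" for n
  define T where "T n = 2 powr (real n * (1 + qt) * bin_entropy (1 / (1 + qt)))
        / (sqrt (2 * pi) * real n powr (3/2)) * (1 / qt)
        * (1 + 1 / qt) powr ((of_int \<lfloor>qt * real n\<rfloor> - qt * real n) - 1/2)" for n
  have MoL: "(\<lambda>n. M n / L n) \<longlonglongrightarrow> 1" unfolding M_def L_def q_def by (rule MoL_limit[OF assms])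
  have LT: "(\<lambda>n. L n / T n) \<longlonglongrightarrow> 1" unfolding L_def T_def q_def by (rule LT_limit[OF assms])
  have "(\<lambda>n. M n / L n * (L n / T n)) \<longlonglongrightarrow> 1 * 1" by (rule tendsto_mult[OF MoL LT])
  hence P: "(\<lambda>n. M n / L n * (L n / T n)) \<longlonglongrightarrow> 1" by simp
  have ev: "eventually (\<lambda>n. M n / L n * (L n / T n) = M n / T n) sequentially"
    using ev_lin2[OF assms, of 1] eventually_ge_at_top[of "1::nat"]
  proof eventually_elim
    case (elim n)
    have "real (nat \<lfloor>qt * real n\<rfloor>) = of_int \<lfloor>qt * real n\<rfloor>" using assms by simp
    hence q1: "q n \<ge> 1" using elim(1) unfolding q_def by linarith
    have "n \<le> n + q n - 1" using q1 by linarith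
    hence bp: "0 < (n + q n - 1) choose n" by (simp add: zero_less_binomial_iff)
    have "L n > 0" unfolding L_def using disc_card[of "q n" n] q1 bp by (simp add: divide_pos_pos)
    thus ?case by simp
  qed
  have fin: "(\<lambda>n. M n / T n) \<longlonglongrightarrow> 1" by (rule Lim_transform_eventually[OF P ev])
  show ?thesis by (rule asymp_equivI') (use fin in \<open>unfold M_def T_def q_def\<close>)
qed

end
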